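(* Consider stochastic gradient-push as in the setting below, with $\{\mathbb G(t)\}$ uniformly strongly connected by sub-sequences of length $L$ and stepsize $\alpha(t)=2/(\bar\lambda t)$, $t\ge1$, where $\bar\lambda=\frac1n\sum_{i=1}^n\lambda_i$. Then for all $t\ge1$, $$\mathbb E\Big[\Big\|\frac1n\sum_{i=1}^nx_i(t)-z^*\Big\|^2\Big]\le\frac{4CG^2}{\bar\lambda^2t},$$ where $C=4+\dfrac{128K_1K_2\bar\lambda}{G\eta\mu^2}+\dfrac{512n(K_2+1)}{\eta(1-\mu)\mu}$, $K_1=\mathbb E\big[\sum_{k=1}^n\|x_k(1)-\alpha(1)\tilde g_k(1)\|\big]$ and $K_2=\dfrac{-\mu^{-1/\ln\mu}}{\ln\mu}$.
   Context: Setting. Fix $n$ agents, $\mathcal V=\{1,\dots,n\}$. For each $t\in\{1,2,\dots\}$, $\mathbb G(t)=(\mathcal V,\mathcal E(t))$ is a directed graph containing a self-arc $(i,i)$ at every vertex; $\mathcal N_i(t)=\{j:(j,i)\in\mathcal E(t)\}$ and $\mathcal N_i^-(t)=\{k:(i,k)\in\mathcal E(t)\}$. Weights $w_{ij}(t)$ are positive for $j\in\mathcal N_i(t)$ and $w_{ij}(t)=0$ otherwise, and satisfy: there is $\beta>0$ with $w_{ij}(t)\ge\beta$ whenever $j\in\mathcal N_i(t)$, and $\sum_{j\in\mathcal N_i^-(t)}w_{ji}(t)=1$ for all $i,t$. Write $\Phi_W(t,\tau)=W(t-1)\cdots W(\tau)$, $W(t)=[w_{ij}(t)]$. Uniformly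 strongly connected by sub-sequences of length $L$: for every $t$ the graph with vertex set $\mathcal V$ and edge set $\bigcup_{k=t}^{t+L-1}\mathcal E(k)$ is strongly connected. Functions: each $f_i:\mathbb R^d\to\mathbb R$ is differentiable, $\lambda_i$-strongly convex ($f_i(x)-f_i(y)\ge\nabla f_i(y)^\top(x-y)+\frac{\lambda_i}2\|x-y\|^2$) and $\gamma_i$-smooth ($\|\nabla f_i(x)-\nabla f_i(y)\|\le\gamma_i\|x-y\|$); $f=\frac1n\sum_if_i$ with unique minimizer $z^*$. Stochastic gradient-push (started at $t=1$): $x_i(t+1)=\sum_{j\in\mathcal N_i(t)}w_{ij}(t)[x_j(t)-\alpha(t)\tilde g_j(t)]$, $x_i(1)\in\mathbb R^d$; $y_i(t+1)=\sum_{j\in\mathcal N_i(t)}w_{ij}(t)y_j(t)$, $y_i(1)=1$; $z_i(t)=x_i(t)/y_i(t)$; $\tilde g_i(t)=\nabla f_i(z_i(t))+N_i(z_i(t))$ where the noise has zero mean conditionally on the past $\mathcal F(t)=\{x_i(s),y_i(s),\tilde g_i(s):i\in\mathcal V,s<t\}\cup\{x_i(t),y_i(t)\}$, is independent across agents/time, and satisfies $\|N_i(x)\|\le c_i$ a.s. for constants $c_i$. Constants: $G>0$ is a constant such that, almost surely for all $i$ and $t$, $\mathbb E[\|\tilde g_i(t)\|^2]\le G^2$, $\|\nabla f_i(z_i(t))\|\le G$ and $\|\nabla f_i(\frac1n\sum_k x_k(t))\|\le G$ (such $G$ exists under these assumptions). $\eta>0$ is any constant with $y_i(t)\ge\eta$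 for all $i,t$ (e.g. $\eta=n^{-nL}$); $\mu\in(0,1)$ is any constant for which there exist stochastic vectors $\phi(t)$ with $|[\Phi_W(t+1,s)]_{ij}-\phi_i(t)|\le4\mu^{t-s}$ for all $i,j$ and $t\ge s$ (e.g. $\mu=(1-n^{-nL})^{1/L}$). *)

theory Defs
  imports "HOL-Probability.Probability"
begin

text \<open>Square matrices of size n are represented as functions nat => nat => real,
  indices ranging over {..<n}.\<close>

definition mat_mul :: "nat \<Rightarrow> (nat \<Rightarrow> nat \<Rightarrow> real) \<Rightarrow> (nat \<Rightarrow> nat \<Rightarrow> real) \<Rightarrow> nat \<Rightarrow> nat \<Rightarrow> real" where
  "mat_mul n A B = (\<lambda>i j. \<Sum>k<n. A i k * B k j)"

definition id_mat :: "nat \<Rightarrow> nat \<Rightarrow> real" where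
  "id_mat = (\<lambda>i j. if i = j then 1 else 0)"

fun PhiW :: "nat \<Rightarrow> (nat \<Rightarrow> nat \<Rightarrow> nat \<Rightarrow> real) \<Rightarrow> nat \<Rightarrow> nat \<Rightarrow> nat \<Rightarrow> nat \<Rightarrow> real" where
  "PhiW n W t tau = (if t \<le> tau then id_mat else mat_mul n (W (t - 1)) (PhiW n W (t - 1) tau))"

definition stoch_vec :: "nat \<Rightarrow> (nat \<Rightarrow> real) \<Rightarrow> bool" where
  "stoch_vec n v \<longleftrightarrow> (\<forall>i<n. 0 \<le> v i) \<and> (\<Sum>i<n. v i) = 1"

definition gen_events :: "'a measure \<Rightarrow> ('a \<Rightarrow> 'b::topological_space) set \<Rightarrow> 'a set set" where
  "gen_events M Xs = sigma_sets (space M) (\<Union>X\<in>Xs. {X -` B \<inter> space M | B. B \<in> sets borel})"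

text \<open>The history F(t): x_i(s), tilde g_i(s) for s < t (s >= 1) and x_i(t).
  (The y_i are deterministic and hence add nothing.)\<close>
definition hist :: "'a measure \<Rightarrow> nat \<Rightarrow> (nat \<Rightarrow> nat \<Rightarrow> 'a \<Rightarrow> 'v::topological_space)
   \<Rightarrow> (nat \<Rightarrow> nat \<Rightarrow> 'a \<Rightarrow> 'v) \<Rightarrow> nat \<Rightarrow> 'a set set" where
  "hist M n x g t = gen_events M
     ({x i s | i s. i < n \<and> 1 \<le> s \<and> s \<le> t} \<union> {g i s | i s. i < n \<and> 1 \<le> s \<and> s < t})"

end

theory Submission
  imports Defs "HOL-Probability.Probability"
begin

declare PhiW.simps[simp del]

lemma PhiW_le: "t \<le> tau \<Longrightarrow> PhiW n W t tau = id_mat"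
  by (subst PhiW.simps) simp

lemma PhiW_Suc: "tau \<le> t \<Longrightarrow> PhiW n W (Suc t) tau = mat_mul n (W t) (PhiW n W t tau)"
  by (subst PhiW.simps) simp

lemma swap_scaleR:
  fixes v :: "nat \<Rightarrow> 'v::real_vector"
  shows "(\<Sum>k<n. c k *\<^sub>R (\<Sum>j<n. d k j *\<^sub>R v j)) = (\<Sum>j<n. (\<Sum>k<n. c k * d k j) *\<^sub>R v j)"
proof -
  have "(\<Sum>k<n. c k *\<^sub>R (\<Sum>j<n. d k j *\<^sub>R v j)) = (\<Sum>k<n. \<Sum>j<n. (c k * d k j) *\<^sub>R v j)"
    by (simp add: scaleR_sum_right)
  also have "\<dots> = (\<Sum>j<n. \<Sum>k<n. (c k * d k j) *\<^sub>R v j)" by (rule sum.swap)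
  also have "\<dots> = (\<Sum>j<n. (\<Sum>k<n. c k * d k j) *\<^sub>R v j)" by (simp add: scaleR_sum_left)
  finally show ?thesis .
qed

lemma swap_scaleR2:
  fixes f :: "nat \<Rightarrow> nat \<Rightarrow> 'v::real_vector"
  shows "(\<Sum>k<n. c k *\<^sub>R (\<Sum>s\<in>S. f k s)) = (\<Sum>s\<in>S. \<Sum>k<n. c k *\<^sub>R f k s)"
  by (simp add: scaleR_sum_right sum.swap[of _ "{..<n}"])

lemma expand:
  fixes W :: "nat \<Rightarrow> nat \<Rightarrow> nat \<Rightarrow> real" and X Gv :: "nat \<Rightarrow> nat \<Rightarrow> 'v::real_vector"
    and a :: "nat \<Rightarrow> real"
  assumes step: "\<And>i t. i < n \<Longrightarrow> 1 \<le> t \<Longrightarrow> X i (t + 1) = (\<Sum>j<n. W t i j *\<^sub>R (X j t - a t *\<^sub>R Gv j t))"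
  shows "1 \<le> t \<Longrightarrow> i < n \<Longrightarrow> X i (t + 1) = (\<Sum>j<n. PhiW n W (t + 1) 1 i j *\<^sub>R (X j 1 - a 1 *\<^sub>R Gv j 1))
          - (\<Sum>s\<in>{2..t}. \<Sum>j<n. (a s * PhiW n W (t + 1) s i j) *\<^sub>R Gv j s)"
proof (induction t arbitrary: i rule: nat_induct_at_least)
  case base
  have P2: "PhiW n W 2 1 = mat_mul n (W 1) (PhiW n W 1 1)"
    using PhiW_Suc[of 1 1 n W] by (simp add: numeral_2_eq_2)
  have h2: "PhiW n W 2 1 i j = W 1 i j" if "j < n" for j
  proof -
    have "PhiW n W 2 1 i j = (\<Sum>k<n. W 1 i k * id_mat k j)"
      unfolding P2 PhiW_le[OF order_refl] mat_mul_def ..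
    also have "\<dots> = W 1 i j" using that by (simp add: id_mat_def if_distrib sum.delta cong: if_cong)
    finally show ?thesis .
  qed
  have h3: "PhiW n W (1 + 1) 1 i j = W 1 i j" if "j < n" for j using that h2 unfolding one_add_one by blast
  have "X i (1 + 1) = (\<Sum>j<n. W 1 i j *\<^sub>R (X j 1 - a 1 *\<^sub>R Gv j 1))" using step[of i 1] base by simp
  also have "\<dots> = (\<Sum>j<n. PhiW n W (1 + 1) 1 i j *\<^sub>R (X j 1 - a 1 *\<^sub>R Gv j 1))"
    by (rule sum.cong[OF refl]) (use h3 in auto)
  finally show ?case by simp
next
  case (Suc t)
  define u where "u j = X j 1 - a 1 *\<^sub>R Gv j 1" for j
  have Phi: "PhiW n W (Suc t + 1) s i j = (\<Sum>k<n. W (t + 1) i k * PhiW n W (t + 1) s k j)" if "s \<le> t + 1" for s j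
    using that PhiW_Suc[of s "t + 1" n W] by (simp add: mat_mul_def)
  have Phi2: "PhiW n W (Suc t + 1) (t + 1) i j = W (t + 1) i j" if "j < n" for j
  proof -
    have "PhiW n W (Suc t + 1) (t + 1) i j = (\<Sum>k<n. W (t + 1) i k * PhiW n W (t + 1) (t + 1) k j)"
      by (rule Phi) simp
    also have "\<dots> = (\<Sum>k<n. W (t + 1) i k * id_mat k j)" unfolding PhiW_le[OF order_refl] ..
    also have "\<dots> = W (t + 1) i j" using that by (simp add: id_mat_def if_distrib sum.delta cong: if_cong)
    finally show ?thesis .
  qed
  have "X i (Suc t + 1) = (\<Sum>k<n. W (t + 1) i k *\<^sub>R (X k (t + 1) - a (t + 1) *\<^sub>R Gv k (t + 1)))"
    using step[of i "t + 1"] Suc by simp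
  also have "\<dots> = (\<Sum>k<n. W (t + 1) i k *\<^sub>R ((\<Sum>j<n. PhiW n W (t + 1) 1 k j *\<^sub>R u j)
          - (\<Sum>s\<in>{2..t}. \<Sum>j<n. (a s * PhiW n W (t + 1) s k j) *\<^sub>R Gv j s)))
       - (\<Sum>k<n. (W (t + 1) i k * a (t + 1)) *\<^sub>R Gv k (t + 1))"
    using Suc by (simp add: u_def scaleR_right_diff_distrib sum_subtractf)
  also have "(\<Sum>k<n. W (t + 1) i k *\<^sub>R ((\<Sum>j<n. PhiW n W (t + 1) 1 k j *\<^sub>R u j)
          - (\<Sum>s\<in>{2..t}. \<Sum>j<n. (a s * PhiW n W (t + 1) s k j) *\<^sub>R Gv j s)))
      = (\<Sum>j<n. PhiW n W (Suc t + 1) 1 i j *\<^sub>R u j)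
          - (\<Sum>s\<in>{2..t}. \<Sum>j<n. (a s * PhiW n W (Suc t + 1) s i j) *\<^sub>R Gv j s)"
  proof -
    have e1: "(\<Sum>k<n. W (t + 1) i k *\<^sub>R (\<Sum>j<n. PhiW n W (t + 1) 1 k j *\<^sub>R u j))
        = (\<Sum>j<n. PhiW n W (Suc t + 1) 1 i j *\<^sub>R u j)"
      by (simp only: swap_scaleR Phi)
    have e2: "(\<Sum>k<n. W (t + 1) i k *\<^sub>R (\<Sum>s\<in>{2..t}. \<Sum>j<n. (a s * PhiW n W (t + 1) s k j) *\<^sub>R Gv j s))
        = (\<Sum>s\<in>{2..t}. \<Sum>j<n. (a s * PhiW n W (Suc t + 1) s i j) *\<^sub>R Gv j s)"
    proof -
      have "(\<Sum>k<n. W (t + 1) i k *\<^sub>R (\<Sum>s\<in>{2..t}. \<Sum>j<n. (a s * PhiW n W (t + 1) s k j) *\<^sub>R Gv j s))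
         = (\<Sum>s\<in>{2..t}. \<Sum>k<n. W (t + 1) i k *\<^sub>R (\<Sum>j<n. (a s * PhiW n W (t + 1) s k j) *\<^sub>R Gv j s))"
        by (rule swap_scaleR2)
      also have "\<dots> = (\<Sum>s\<in>{2..t}. \<Sum>j<n. (\<Sum>k<n. W (t + 1) i k * (a s * PhiW n W (t + 1) s k j)) *\<^sub>R Gv j s)"
        by (simp only: swap_scaleR)
      also have "\<dots> = (\<Sum>s\<in>{2..t}. \<Sum>j<n. (a s * PhiW n W (Suc t + 1) s i j) *\<^sub>R Gv j s)"
      proof (rule sum.cong[OF refl], rule sum.cong[OF refl])
        fix s j assume "s \<in> {2..t}"
        then have "s \<le> t + 1" by simp
        then have pe: "PhiW n W (Suc t + 1) s i j = (\<Sum>k<n. W (t + 1) i k * PhiW n W (t + 1) s k j)"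
          by (rule Phi)
        have "(\<Sum>k<n. W (t + 1) i k * (a s * PhiW n W (t + 1) s k j)) = a s * PhiW n W (Suc t + 1) s i j"
          unfolding pe sum_distrib_left by (simp add: algebra_simps)
        then show "(\<Sum>k<n. W (t + 1) i k * (a s * PhiW n W (t + 1) s k j)) *\<^sub>R Gv j s
            = (a s * PhiW n W (Suc t + 1) s i j) *\<^sub>R Gv j s" by simp
      qed
      finally show ?thesis .
    qed
    show ?thesis by (simp only: scaleR_right_diff_distrib sum_subtractf e1 e2)
  qed
  also have "(\<Sum>k<n. (W (t + 1) i k * a (t + 1)) *\<^sub>R Gv k (t + 1))
      = (\<Sum>j<n. (a (t + 1) * PhiW n W (Suc t + 1) (t + 1) i j) *\<^sub>R Gv j (t + 1))"
    by (rule sum.cong[OF refl]) (use Phi2 in \<open>auto simp: mult.commute\<close>)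
  also have "(\<Sum>j<n. PhiW n W (Suc t + 1) 1 i j *\<^sub>R u j)
          - (\<Sum>s\<in>{2..t}. \<Sum>j<n. (a s * PhiW n W (Suc t + 1) s i j) *\<^sub>R Gv j s)
          - (\<Sum>j<n. (a (t + 1) * PhiW n W (Suc t + 1) (t + 1) i j) *\<^sub>R Gv j (t + 1))
     = (\<Sum>j<n. PhiW n W (Suc t + 1) 1 i j *\<^sub>R u j)
          - (\<Sum>s\<in>{2..Suc t}. \<Sum>j<n. (a s * PhiW n W (Suc t + 1) s i j) *\<^sub>R Gv j s)"
  proof -
    have "{2..Suc t} = insert (t + 1) {2..t}" using Suc by auto
    then show ?thesis by (simp add: algebra_simps)
  qed
  finally show ?case by (simp add: u_def)
qed

lemma consensus:
  fixes P :: "nat \<Rightarrow> nat \<Rightarrow> nat \<Rightarrow> real" and u :: "nat \<Rightarrow> 'v::real_normed_vector"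
    and g :: "nat \<Rightarrow> nat \<Rightarrow> 'v" and a :: "nat \<Rightarrow> real" and \<phi> \<mu> :: real
  assumes n: "0 < n" and t: "1 \<le> t"
    and Xi: "Xi = (\<Sum>j<n. P 1 i j *\<^sub>R u j) - (\<Sum>s\<in>{2..t}. \<Sum>j<n. (a s * P s i j) *\<^sub>R g j s)"
    and Yi: "Yi = (\<Sum>j<n. P 1 i j)"
    and xb: "xb = (1 / real n) *\<^sub>R ((\<Sum>j<n. u j) - (\<Sum>s\<in>{2..t}. a s *\<^sub>R (\<Sum>j<n. g j s)))"
    and mix: "\<And>s j. 1 \<le> s \<Longrightarrow> s \<le> t \<Longrightarrow> j < n \<Longrightarrow> \<bar>P s i j - \<phi>\<bar> \<le> 4 * \<mu> ^ (t - s)"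
    and a: "\<And>s. s \<in> {2..t} \<Longrightarrow> 0 \<le> a s" and mu: "0 < \<mu>" "\<mu> \<le> 1"
  shows "norm (Xi - Yi *\<^sub>R xb) \<le> 8 * \<mu> ^ (t - 1) * (\<Sum>j<n. norm (u j))
           + (\<Sum>s\<in>{2..t}. 8 * \<mu> ^ (t - s) * a s * (\<Sum>j<n. norm (g j s)))"
proof -
  define m where "m = (1 / real n) * (\<Sum>l<n. P 1 i l)"
  have Ym: "Yi / real n = m" using n by (simp add: m_def Yi)
  have mphi: "\<bar>m - \<phi>\<bar> \<le> 4 * \<mu> ^ (t - 1)"
  proof -
    have "m - \<phi> = (1 / real n) * (\<Sum>l<n. (P 1 i l - \<phi>))"
      using n by (simp add: m_def sum_subtractf field_simps)
    also have "\<bar>\<dots>\<bar> \<le> (1 / real n) * (\<Sum>l<n. 4 * \<mu> ^ (t - 1))"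
    proof -
      have "\<bar>\<Sum>l<n. (P 1 i l - \<phi>)\<bar> \<le> (\<Sum>l<n. \<bar>P 1 i l - \<phi>\<bar>)" by (rule sum_abs)
      also have "\<dots> \<le> (\<Sum>l<n. 4 * \<mu> ^ (t - 1))" by (rule sum_mono) (use mix t in auto)
      finally have "\<bar>\<Sum>l<n. (P 1 i l - \<phi>)\<bar> \<le> (\<Sum>l<n. 4 * \<mu> ^ (t - 1))" .
      then have "(1 / real n) * \<bar>\<Sum>l<n. (P 1 i l - \<phi>)\<bar> \<le> (1 / real n) * (\<Sum>l<n. 4 * \<mu> ^ (t - 1))"
        by (rule mult_left_mono) simp
      then show ?thesis using n by (simp only: abs_mult) simp
    qed
    also have "\<dots> = 4 * \<mu> ^ (t - 1)" using n by simp
    finally show ?thesis .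
  qed
  have b1: "\<bar>P 1 i j - m\<bar> \<le> 8 * \<mu> ^ (t - 1)" if "j < n" for j
    using mix[of 1 j] t that mphi by simp
  have bs: "\<bar>P s i j - m\<bar> \<le> 8 * \<mu> ^ (t - s)" if "s \<in> {2..t}" "j < n" for s j
  proof -
    have "\<mu> ^ (t - 1) \<le> \<mu> ^ (t - s)" using that mu by (intro power_decreasing) auto
    then show ?thesis using mix[of s j] that mphi by simp
  qed
  have "Yi *\<^sub>R xb = m *\<^sub>R ((\<Sum>j<n. u j) - (\<Sum>s\<in>{2..t}. a s *\<^sub>R (\<Sum>j<n. g j s)))"
  proof -
    have "Yi *\<^sub>R xb = (Yi / real n) *\<^sub>R ((\<Sum>j<n. u j) - (\<Sum>s\<in>{2..t}. a s *\<^sub>R (\<Sum>j<n. g j s)))"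
      unfolding xb scaleR_scaleR by simp
    then show ?thesis unfolding Ym .
  qed
  also have "\<dots> = (\<Sum>j<n. m *\<^sub>R u j) - (\<Sum>s\<in>{2..t}. \<Sum>j<n. (a s * m) *\<^sub>R g j s)"
    unfolding scaleR_right_diff_distrib scaleR_sum_right scaleR_scaleR by (simp only: mult.commute)
  finally have YX: "Yi *\<^sub>R xb = (\<Sum>j<n. m *\<^sub>R u j) - (\<Sum>s\<in>{2..t}. \<Sum>j<n. (a s * m) *\<^sub>R g j s)" .
  have d1: "(\<Sum>j<n. P 1 i j *\<^sub>R u j) - (\<Sum>j<n. m *\<^sub>R u j) = (\<Sum>j<n. (P 1 i j - m) *\<^sub>R u j)"
    by (simp only: sum_subtractf[symmetric] scaleR_left_diff_distrib)
  have d2: "(\<Sum>s\<in>{2..t}. \<Sum>j<n. (a s * P s i j) *\<^sub>R g j s) - (\<Sum>s\<in>{2..t}. \<Sum>j<n. (a s * m) *\<^sub>R g j s)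
      = (\<Sum>s\<in>{2..t}. \<Sum>j<n. (a s * (P s i j - m)) *\<^sub>R g j s)"
    by (simp only: sum_subtractf[symmetric] scaleR_left_diff_distrib right_diff_distrib)
  have XY: "Xi - Yi *\<^sub>R xb = (\<Sum>j<n. (P 1 i j - m) *\<^sub>R u j) - (\<Sum>s\<in>{2..t}. \<Sum>j<n. (a s * (P s i j - m)) *\<^sub>R g j s)"
    unfolding Xi YX d1[symmetric] d2[symmetric] by (simp add: algebra_simps)
  have "norm (Xi - Yi *\<^sub>R xb) = norm ((\<Sum>j<n. (P 1 i j - m) *\<^sub>R u j) - (\<Sum>s\<in>{2..t}. \<Sum>j<n. (a s * (P s i j - m)) *\<^sub>R g j s))"
    unfolding XY ..
  also have "\<dots> \<le> norm (\<Sum>j<n. (P 1 i j - m) *\<^sub>R u j) + norm (\<Sum>s\<in>{2..t}. \<Sum>j<n. (a s * (P s i j - m)) *\<^sub>R g j s)"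
    by (rule norm_triangle_ineq4)
  also have "\<dots> \<le> 8 * \<mu> ^ (t - 1) * (\<Sum>j<n. norm (u j)) + (\<Sum>s\<in>{2..t}. 8 * \<mu> ^ (t - s) * a s * (\<Sum>j<n. norm (g j s)))"
  proof (rule add_mono)
    have "norm (\<Sum>j<n. (P 1 i j - m) *\<^sub>R u j) \<le> (\<Sum>j<n. norm ((P 1 i j - m) *\<^sub>R u j))" by (rule norm_sum)
    also have "\<dots> \<le> (\<Sum>j<n. 8 * \<mu> ^ (t - 1) * norm (u j))"
    proof (rule sum_mono)
      fix j assume "j \<in> {..<n}"
      then have "\<bar>P 1 i j - m\<bar> \<le> 8 * \<mu> ^ (t - 1)" using b1 by simp
      then have "\<bar>P 1 i j - m\<bar> * norm (u j) \<le> 8 * \<mu> ^ (t - 1) * norm (u j)"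
        by (rule mult_right_mono) simp
      then show "norm ((P 1 i j - m) *\<^sub>R u j) \<le> 8 * \<mu> ^ (t - 1) * norm (u j)" by simp
    qed
    finally show "norm (\<Sum>j<n. (P 1 i j - m) *\<^sub>R u j) \<le> 8 * \<mu> ^ (t - 1) * (\<Sum>j<n. norm (u j))"
      by (simp add: sum_distrib_left)
    have "norm (\<Sum>s\<in>{2..t}. \<Sum>j<n. (a s * (P s i j - m)) *\<^sub>R g j s)
        \<le> (\<Sum>s\<in>{2..t}. norm (\<Sum>j<n. (a s * (P s i j - m)) *\<^sub>R g j s))" by (rule norm_sum)
    also have "\<dots> \<le> (\<Sum>s\<in>{2..t}. 8 * \<mu> ^ (t - s) * a s * (\<Sum>j<n. norm (g j s)))"
    proof (rule sum_mono)
      fix s assume s: "s \<in> {2..t}"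
      have "norm (\<Sum>j<n. (a s * (P s i j - m)) *\<^sub>R g j s) \<le> (\<Sum>j<n. norm ((a s * (P s i j - m)) *\<^sub>R g j s))"
        by (rule norm_sum)
      also have "\<dots> \<le> (\<Sum>j<n. 8 * \<mu> ^ (t - s) * a s * norm (g j s))"
      proof (rule sum_mono)
        fix j assume j: "j \<in> {..<n}"
        have "norm ((a s * (P s i j - m)) *\<^sub>R g j s) = a s * \<bar>P s i j - m\<bar> * norm (g j s)"
          using a[OF s] by (simp add: abs_mult)
        also have "\<dots> \<le> a s * (8 * \<mu> ^ (t - s)) * norm (g j s)"
        proof -
          have "\<bar>P s i j - m\<bar> \<le> 8 * \<mu> ^ (t - s)" using bs[OF s] j by simp
          then have "a s * \<bar>P s i j - m\<bar> \<le> a s * (8 * \<mu> ^ (t - s))" using a[OF s] by (rule mult_left_mono)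
          then show ?thesis by (rule mult_right_mono) simp
        qed
        finally show "norm ((a s * (P s i j - m)) *\<^sub>R g j s) \<le> 8 * \<mu> ^ (t - s) * a s * norm (g j s)"
          by (simp add: algebra_simps)
      qed
      finally show "norm (\<Sum>j<n. (a s * (P s i j - m)) *\<^sub>R g j s) \<le> 8 * \<mu> ^ (t - s) * a s * (\<Sum>j<n. norm (g j s))"
        by (simp add: sum_distrib_left)
    qed
    finally show "norm (\<Sum>s\<in>{2..t}. \<Sum>j<n. (a s * (P s i j - m)) *\<^sub>R g j s)
        \<le> (\<Sum>s\<in>{2..t}. 8 * \<mu> ^ (t - s) * a s * (\<Sum>j<n. norm (g j s)))" .
  qed
  finally show ?thesis .
qed

lemma zero_mean_real:
  fixes X Y :: "'a \<Rightarrow> real"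
  assumes prob: "prob_space M" and sub: "subalgebra M F"
    and Xm: "X \<in> borel_measurable M" and Xi: "integrable M X"
    and XA: "\<And>A. A \<in> sets F \<Longrightarrow> (\<integral>x\<in>A. X x \<partial>M) = 0"
    and Ym: "Y \<in> borel_measurable F" and YXi: "integrable M (\<lambda>x. Y x * X x)"
  shows "(\<integral>x. Y x * X x \<partial>M) = 0"
proof -
  interpret prob_space M by (rule prob)
  interpret finite_measure_subalgebra M F
    by unfold_locales (rule sub)
  have ae: "AE x in M. real_cond_exp M F X x = 0"
    by (rule real_cond_exp_charact) (use XA Xi in auto)
  have "(\<integral>x. Y x * X x \<partial>M) = (\<integral>x. Y x * real_cond_exp M F X x \<partial>M)"
    by (rule real_cond_exp_intg(2)[symmetric]) (use YXi Ym Xm in auto)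
  also have "\<dots> = (\<integral>x. 0 \<partial>M)"
    by (rule integral_cong_AE) (use ae Ym measurable_from_subalg[OF sub Ym] in auto)
  finally show ?thesis by simp
qed

lemma zero_mean_vec:
  fixes X Y :: "'a \<Rightarrow> 'v::euclidean_space"
  assumes prob: "prob_space M" and sub: "subalgebra M F"
    and Xm: "X \<in> borel_measurable M" and Xb: "AE x in M. norm (X x) \<le> cX"
    and XA: "\<And>A. A \<in> sets F \<Longrightarrow> (\<integral>x\<in>A. X x \<partial>M) = 0"
    and Ym: "Y \<in> borel_measurable F" and Yb: "AE x in M. norm (Y x) \<le> cY"
  shows "(\<integral>x. X x \<bullet> Y x \<partial>M) = 0"
proof -
  interpret prob_space M by (rule prob)
  have YmM: "Y \<in> borel_measurable M" using measurable_from_subalg[OF sub Ym] .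
  have Xi: "integrable M X" using Xb Xm by (rule integrable_const_bound)
  have comp: "(\<integral>x. (Y x \<bullet> b) * (X x \<bullet> b) \<partial>M) = 0" if b: "b \<in> Basis" for b
  proof (rule zero_mean_real[OF prob sub])
    show "(\<lambda>x. X x \<bullet> b) \<in> borel_measurable M" using Xm by measurable
    show "integrable M (\<lambda>x. X x \<bullet> b)" using Xi by auto
    show "(\<lambda>x. Y x \<bullet> b) \<in> borel_measurable F" using Ym by measurable
    show "integrable M (\<lambda>x. (Y x \<bullet> b) * (X x \<bullet> b))"
    proof (rule integrable_const_bound[where B="cY * cX"])
      show "AE x in M. norm ((Y x \<bullet> b) * (X x \<bullet> b)) \<le> cY * cX"
        using Xb Yb
      proof eventually_elim
        case (elim x)
        have "norm ((Y x \<bullet> b) * (X x \<bullet> b)) = \<bar>Y x \<bullet> b\<bar> * \<bar>X x \<bullet> b\<bar>" by (simp add: abs_mult)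
        also have "\<dots> \<le> norm (Y x) * norm (X x)"
          using Basis_le_norm[OF b] by (intro mult_mono) auto
        also have "\<dots> \<le> cY * cX" using elim order_trans[OF norm_ge_zero elim(2)] by (intro mult_mono) auto
        finally show ?case .
      qed
      show "(\<lambda>x. (Y x \<bullet> b) * (X x \<bullet> b)) \<in> borel_measurable M" using Xm YmM by measurable
    qed
    fix A assume A: "A \<in> sets F"
    have AM: "A \<in> sets M" using A sub by (auto simp: subalgebra_def)
    have "(\<integral>x\<in>A. X x \<bullet> b \<partial>M) = (\<integral>x. (indicator A x *\<^sub>R X x) \<bullet> b \<partial>M)"
      by (simp add: set_lebesgue_integral_def)
    also have "\<dots> = (\<integral>x\<in>A. X x \<partial>M) \<bullet> b"
      unfolding set_lebesgue_integral_def
      by (rule integral_inner_left) (use Xi AM in \<open>auto intro: integrable_mult_indicator\<close>)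
    also have "\<dots> = 0" using XA[OF A] by simp
    finally show "(\<integral>x\<in>A. X x \<bullet> b \<partial>M) = 0" .
  qed
  have "(\<integral>x. X x \<bullet> Y x \<partial>M) = (\<integral>x. (\<Sum>b\<in>Basis. (Y x \<bullet> b) * (X x \<bullet> b)) \<partial>M)"
  proof (rule Bochner_Integration.integral_cong)
    fix x
    show "X x \<bullet> Y x = (\<Sum>b\<in>Basis. (Y x \<bullet> b) * (X x \<bullet> b))"
      unfolding euclidean_inner[of "X x" "Y x"] by (rule sum.cong) (auto simp: mult.commute)
  qed simp
  also have "\<dots> = (\<Sum>b\<in>Basis. (\<integral>x. (Y x \<bullet> b) * (X x \<bullet> b) \<partial>M))"
  proof (rule Bochner_Integration.integral_sum)
    fix b :: 'v assume b: "b \<in> Basis"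
    show "integrable M (\<lambda>x. (Y x \<bullet> b) * (X x \<bullet> b))"
    proof (rule integrable_const_bound[where B="cY * cX"])
      show "AE x in M. norm ((Y x \<bullet> b) * (X x \<bullet> b)) \<le> cY * cX"
        using Xb Yb
      proof eventually_elim
        case (elim x)
        have "norm ((Y x \<bullet> b) * (X x \<bullet> b)) = \<bar>Y x \<bullet> b\<bar> * \<bar>X x \<bullet> b\<bar>" by (simp add: abs_mult)
        also have "\<dots> \<le> norm (Y x) * norm (X x)"
          using Basis_le_norm[OF b] by (intro mult_mono) auto
        also have "\<dots> \<le> cY * cX" using elim order_trans[OF norm_ge_zero elim(2)] by (intro mult_mono) auto
        finally show ?case .
      qed
      show "(\<lambda>x. (Y x \<bullet> b) * (X x \<bullet> b)) \<in> borel_measurable M" using Xm YmM by measurable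
    qed
  qed
  also have "\<dots> = 0" using comp by simp
  finally show ?thesis .
qed

lemma K2_bound:
  fixes \<mu> s :: real
  assumes "0 < \<mu>" "\<mu> < 1" "0 \<le> s"
  shows "s * \<mu> powr s \<le> - (\<mu> powr (- 1 / ln \<mu>)) / ln \<mu>"
proof -
  define c where "c = - ln \<mu>"
  have c: "0 < c" using assms by (simp add: c_def)
  have e1: "\<mu> powr s = exp (- c * s)" using assms by (simp add: powr_def c_def)
  have e2: "\<mu> powr (- 1 / ln \<mu>) = exp (-1)" using assms c by (simp add: powr_def c_def)
  have "c * s \<le> exp (c * s - 1)" using exp_ge_add_one_self[of "c * s - 1"] by simp
  then have "c * s * exp (- c * s) \<le> exp (-1)"
    by (simp add: exp_diff exp_minus field_simps)
  then have "s * exp (- c * s) \<le> exp (-1) / c" using c by (simp add: field_simps)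
  then show ?thesis using e1 e2 c by (simp add: c_def)
qed

lemma K2_nat:
  fixes \<mu> :: real
  assumes "0 < \<mu>" "\<mu> < 1"
  shows "real k * \<mu> ^ k \<le> - (\<mu> powr (- 1 / ln \<mu>)) / ln \<mu>"
  using K2_bound[OF assms, of "real k"] assms by (simp add: powr_realpow)

lemma K2_pos:
  fixes \<mu> :: real
  assumes "0 < \<mu>" "\<mu> < 1"
  shows "0 \<le> - (\<mu> powr (- 1 / ln \<mu>)) / ln \<mu>"
  using K2_nat[OF assms, of 0] by simp

lemma sum_bound:
  fixes \<mu> K2 :: real
  assumes mu: "0 < \<mu>" "\<mu> < 1" and K2: "K2 = - (\<mu> powr (- 1 / ln \<mu>)) / ln \<mu>"
  shows "real t * (\<Sum>r\<in>{2..<t}. \<mu> ^ (t - 1 - r) / real r) \<le> 4 * (K2 + 1) / (1 - \<mu>)"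
proof -
  define \<nu> where "\<nu> = sqrt \<mu>"
  have nu: "0 < \<nu>" "\<nu> < 1" "\<nu> * \<nu> = \<mu>" using mu by (auto simp: \<nu>_def real_sqrt_lt_1_iff)
  have termb: "real t * (\<mu> ^ (t - 1 - r) / real r) \<le> (2 + 2 * K2) * \<nu> ^ (t - 1 - r)"
    if r: "r \<in> {2..<t}" for r
  proof -
    define k where "k = t - 1 - r"
    have tk: "real t = real k + 1 + real r" using r by (simp add: k_def)
    have r1: "1 \<le> real r" using r by simp
    have "real t / real r \<le> 2 + real k"
    proof -
      have "real k * 1 \<le> real k * real r" using r1 by (intro mult_left_mono) auto
      then have "real t \<le> (2 + real k) * real r" using r1 tk by (simp add: distrib_right)
      then show ?thesis using r1 by (simp add: divide_le_eq)
    qed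
    have mk: "\<mu> ^ k = \<nu> ^ k * \<nu> ^ k" using nu by (metis power_mult_distrib)
    have "real k / 2 * \<mu> powr (real k / 2) \<le> K2" using K2_bound[OF mu, of "real k / 2"] K2 by simp
    moreover have "\<mu> powr (real k / 2) = \<nu> ^ k"
      using mu by (simp add: \<nu>_def powr_half_sqrt_powr powr_realpow real_sqrt_power)
    ultimately have kk: "real k * \<nu> ^ k \<le> 2 * K2" by simp
    have "real t * (\<mu> ^ k / real r) = (real t / real r) * \<mu> ^ k" by simp
    also have "\<dots> \<le> (2 + real k) * \<mu> ^ k" by (rule mult_right_mono) (use \<open>real t / real r \<le> 2 + real k\<close> mu in auto)
    also have "\<dots> = 2 * \<nu> ^ k * \<nu> ^ k + (real k * \<nu> ^ k) * \<nu> ^ k" using mk by (simp add: algebra_simps)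
    also have "\<dots> \<le> 2 * \<nu> ^ k + 2 * K2 * \<nu> ^ k"
    proof -
      have a: "\<nu> ^ k \<le> 1" using nu by (simp add: power_le_one)
      have b: "0 \<le> \<nu> ^ k" using nu by simp
      have "2 * \<nu> ^ k * \<nu> ^ k \<le> 2 * \<nu> ^ k" using a b by (simp add: mult_left_le)
      moreover have "(real k * \<nu> ^ k) * \<nu> ^ k \<le> 2 * K2 * \<nu> ^ k" using kk b by (simp add: mult_right_mono)
      ultimately show ?thesis by simp
    qed
    finally show ?thesis by (simp add: k_def algebra_simps)
  qed
  have "real t * (\<Sum>r\<in>{2..<t}. \<mu> ^ (t - 1 - r) / real r) = (\<Sum>r\<in>{2..<t}. real t * (\<mu> ^ (t - 1 - r) / real r))"
    by (simp add: sum_distrib_left)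
  also have "\<dots> \<le> (\<Sum>r\<in>{2..<t}. (2 + 2 * K2) * \<nu> ^ (t - 1 - r))" by (rule sum_mono) (use termb in auto)
  also have "\<dots> \<le> (\<Sum>r\<in>{0..<t}. (2 + 2 * K2) * \<nu> ^ (t - 1 - r))"
    using K2_pos[OF mu] K2 nu by (intro sum_mono2) auto
  also have "\<dots> = (2 + 2 * K2) * (\<Sum>r<t. \<nu> ^ (t - Suc r))" by (simp add: sum_distrib_left atLeast0LessThan)
  also have "(\<Sum>r<t. \<nu> ^ (t - Suc r)) = (\<Sum>r<t. \<nu> ^ r)" by (rule sum.nat_diff_reindex)
  also have "(2 + 2 * K2) * (\<Sum>r<t. \<nu> ^ r) \<le> (2 + 2 * K2) * (1 / (1 - \<nu>))"
  proof (rule mult_left_mono)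
    have "(\<Sum>r<t. \<nu> ^ r) = (1 - \<nu> ^ t) / (1 - \<nu>)" using nu by (simp add: sum_gp_strict)
    also have "\<dots> \<le> 1 / (1 - \<nu>)" using nu by (simp add: divide_right_mono)
    finally show "(\<Sum>r<t. \<nu> ^ r) \<le> 1 / (1 - \<nu>)" .
    show "0 \<le> 2 + 2 * K2" using K2_pos[OF mu] K2 by simp
  qed
  also have "(2 + 2 * K2) * (1 / (1 - \<nu>)) \<le> (2 + 2 * K2) * (2 / (1 - \<mu>))"
  proof (rule mult_left_mono)
    have m: "1 - \<mu> = (1 - \<nu>) * (1 + \<nu>)" using nu by (simp add: algebra_simps)
    have "1 / (1 - \<nu>) = (1 + \<nu>) / (1 - \<mu>)" unfolding m using nu by simp
    also have "\<dots> \<le> 2 / (1 - \<mu>)" using nu mu by (intro divide_right_mono) auto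
    finally show "1 / (1 - \<nu>) \<le> 2 / (1 - \<mu>)" .
    show "0 \<le> 2 + 2 * K2" using K2_pos[OF mu] K2 by simp
  qed
  also have "\<dots> = 4 * (K2 + 1) / (1 - \<mu>)" by (simp add: add_divide_distrib algebra_simps)
  finally show ?thesis .
qed

lemma rec_bound:
  fixes a :: "nat \<Rightarrow> real" and A P Q \<mu> K2 B :: real
  assumes mu: "0 < \<mu>" "\<mu> < 1" and K2: "K2 = - (\<mu> powr (- 1 / ln \<mu>)) / ln \<mu>"
    and A: "0 \<le> A" and P: "0 \<le> P" and Q: "0 \<le> Q"
    and a1: "a 1 \<le> A" and a2: "a 2 \<le> A"
    and step: "\<And>t. 2 \<le> t \<Longrightarrow> a (t + 1) \<le> (1 - 2 / real t) * a t + 4 * A / (real t)\<^sup>2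
         + P * \<mu> ^ (t - 2) / real t + Q / real t * (\<Sum>r\<in>{2..<t}. \<mu> ^ (t - 1 - r) / real r)"
    and B1: "2 * A \<le> B" and B2: "4 * A + P * K2 / \<mu>\<^sup>2 + Q * (4 * (K2 + 1) / (1 - \<mu>)) \<le> B"
    and t: "1 \<le> t"
  shows "a t \<le> B / real t"
proof -
  have B0: "0 \<le> B" using A B1 by simp
  have main: "a t \<le> B / real t" if "2 \<le> t" for t
    using that
  proof (induction t rule: nat_induct_at_least)
    case base
    then show ?case using a2 B1 by simp
  next
    case (Suc t)
    define u where "u = real t"
    have u: "2 \<le> u" using Suc by (simp add: u_def)
    define S where "S = (\<Sum>r\<in>{2..<t}. \<mu> ^ (t - 1 - r) / real r)"
    have S: "u * S \<le> 4 * (K2 + 1) / (1 - \<mu>)" using sum_bound[OF mu K2, of t] by (simp add: u_def S_def)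
    have m: "u * \<mu> ^ (t - 2) \<le> K2 / \<mu>\<^sup>2"
    proof -
      have "\<mu> ^ t = \<mu> ^ (t - 2) * \<mu>\<^sup>2" using Suc by (metis le_add_diff_inverse2 power_add)
      then have "u * \<mu> ^ (t - 2) * \<mu>\<^sup>2 \<le> K2" using K2_nat[OF mu, of t] K2 by (simp add: u_def mult.assoc)
      then show ?thesis using mu by (simp add: field_simps)
    qed
    have c1: "(1 - 2 / u) * a t \<le> (1 - 2 / u) * (B / u)"
      using Suc.IH u by (intro mult_left_mono) (auto simp: u_def field_simps)
    have "4 * A / u\<^sup>2 + P * \<mu> ^ (t - 2) / u + Q / u * S = (4 * A + P * (u * \<mu> ^ (t - 2)) + Q * (u * S)) / u\<^sup>2"
      using u by (simp add: field_simps power2_eq_square)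
    also have "\<dots> \<le> B / u\<^sup>2"
    proof (rule divide_right_mono)
      have "P * (u * \<mu> ^ (t - 2)) \<le> P * (K2 / \<mu>\<^sup>2)" using m P by (rule mult_left_mono)
      moreover have "Q * (u * S) \<le> Q * (4 * (K2 + 1) / (1 - \<mu>))" using S Q by (rule mult_left_mono)
      ultimately show "4 * A + P * (u * \<mu> ^ (t - 2)) + Q * (u * S) \<le> B" using B2 by simp
    qed simp
    finally have c2: "4 * A / u\<^sup>2 + P * \<mu> ^ (t - 2) / u + Q / u * S \<le> B / u\<^sup>2" .
    have "a (Suc t) \<le> (1 - 2 / u) * a t + (4 * A / u\<^sup>2 + P * \<mu> ^ (t - 2) / u + Q / u * S)"
      using step[of t] Suc by (simp add: u_def S_def)
    also have "\<dots> \<le> (1 - 2 / u) * (B / u) + B / u\<^sup>2" using c1 c2 by simp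
    also have "\<dots> \<le> B / (u + 1)"
    proof -
      have "(1 - 2 / u) * (B / u) + B / u\<^sup>2 = B * (u - 1) / u\<^sup>2" using u by (simp add: field_simps power2_eq_square)
      also have "\<dots> \<le> B / (u + 1)"
      proof -
        have "B * ((u - 1) * (u + 1)) \<le> B * u\<^sup>2" using B0 by (intro mult_left_mono) (auto simp: algebra_simps power2_eq_square)
        then show ?thesis using u by (simp add: field_simps)
      qed
      finally show ?thesis .
    qed
    finally show ?case by (simp add: u_def add.commute)
  qed
  show ?thesis
  proof (cases "t = 1")
    case True then show ?thesis using a1 B1 A by simp
  next
    case False then show ?thesis using main t by simp
  qed
qed

locale sgp =
  fixes M :: "'a measure" and n :: nat
    and w :: "nat \<Rightarrow> nat \<Rightarrow> nat \<Rightarrow> real"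
    and f :: "nat \<Rightarrow> 'v::euclidean_space \<Rightarrow> real"
    and grad :: "nat \<Rightarrow> 'v \<Rightarrow> 'v"
    and lam gam c :: "nat \<Rightarrow> real"
    and zstar :: 'v
    and x :: "nat \<Rightarrow> nat \<Rightarrow> 'a \<Rightarrow> 'v"
    and y :: "nat \<Rightarrow> nat \<Rightarrow> real"
    and gt :: "nat \<Rightarrow> nat \<Rightarrow> 'a \<Rightarrow> 'v"
    and N :: "nat \<Rightarrow> nat \<Rightarrow> 'a \<Rightarrow> 'v \<Rightarrow> 'v"
    and \<alpha> :: "nat \<Rightarrow> real"
    and G \<eta> \<mu> lambar :: real
    and z :: "nat \<Rightarrow> nat \<Rightarrow> 'a \<Rightarrow> 'v"
  assumes prob: "prob_space M"
    and n_pos: "0 < n"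
    and w_colsum: "\<And>t j. j < n \<Longrightarrow> (\<Sum>i<n. w t i j) = 1"
    and lambar_def: "lambar = (\<Sum>i<n. lam i) / real n"
    and z_def: "z = (\<lambda>i t \<omega>. (1 / y i t) *\<^sub>R x i t \<omega>)"
    and lam_pos: "\<And>i. i < n \<Longrightarrow> 0 < lam i"
    and f_sconv: "\<And>i u v. i < n \<Longrightarrow>
                   f i u - f i v \<ge> grad i v \<bullet> (u - v) + lam i / 2 * (norm (u - v))\<^sup>2"
    and f_smooth: "\<And>i u v. i < n \<Longrightarrow> norm (grad i u - grad i v) \<le> gam i * norm (u - v)"
    and zstar_min: "\<And>v. v \<noteq> zstar \<Longrightarrow>
                   (\<Sum>i<n. f i zstar) / real n < (\<Sum>i<n. f i v) / real n"
    and \<alpha>_def: "\<And>t. 1 \<le> t \<Longrightarrow> \<alpha> t = 2 / (lambar * real t)"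
    and x_meas: "\<And>i. i < n \<Longrightarrow> x i 1 \<in> borel_measurable M"
    and x1_int: "\<And>i. i < n \<Longrightarrow> integrable M (\<lambda>\<omega>. norm (x i 1 \<omega>))"
    and x_step: "\<And>i t \<omega>. i < n \<Longrightarrow> 1 \<le> t \<Longrightarrow>
                   x i (t + 1) \<omega> = (\<Sum>j<n. w t i j *\<^sub>R (x j t \<omega> - \<alpha> t *\<^sub>R gt j t \<omega>))"
    and y_1: "\<And>i. i < n \<Longrightarrow> y i 1 = 1"
    and y_step: "\<And>i t. i < n \<Longrightarrow> 1 \<le> t \<Longrightarrow> y i (t + 1) = (\<Sum>j<n. w t i j * y j t)"
    and gt_meas: "\<And>i t. i < n \<Longrightarrow> 1 \<le> t \<Longrightarrow> gt i t \<in> borel_measurable M"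
    and gt_def: "\<And>i t \<omega>. i < n \<Longrightarrow> 1 \<le> t \<Longrightarrow>
                   gt i t \<omega> = grad i (z i t \<omega>) + N i t \<omega> (z i t \<omega>)"
    and N_zero_mean: "\<And>i t A. i < n \<Longrightarrow> 1 \<le> t \<Longrightarrow> A \<in> hist M n x gt t \<Longrightarrow>
                   (LINT \<omega>:A|M. N i t \<omega> (z i t \<omega>)) = 0"
    and N_bdd: "\<And>i t. i < n \<Longrightarrow> 1 \<le> t \<Longrightarrow> AE \<omega> in M. \<forall>v. norm (N i t \<omega> v) \<le> c i"
    and G_pos: "0 < G"
    and G_sq: "\<And>i t. i < n \<Longrightarrow> 1 \<le> t \<Longrightarrow>
                   integrable M (\<lambda>\<omega>. (norm (gt i t \<omega>))\<^sup>2) \<and>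
                   integral\<^sup>L M (\<lambda>\<omega>. (norm (gt i t \<omega>))\<^sup>2) \<le> G\<^sup>2"
    and G_grad_z: "\<And>i t. i < n \<Longrightarrow> 1 \<le> t \<Longrightarrow> AE \<omega> in M. norm (grad i (z i t \<omega>)) \<le> G"
    and G_grad_avg: "\<And>i t. i < n \<Longrightarrow> 1 \<le> t \<Longrightarrow>
                   AE \<omega> in M. norm (grad i ((1 / real n) *\<^sub>R (\<Sum>k<n. x k t \<omega>))) \<le> G"
    and \<eta>_pos: "0 < \<eta>"
    and \<eta>_bound: "\<And>i t. i < n \<Longrightarrow> 1 \<le> t \<Longrightarrow> \<eta> \<le> y i t"
    and \<mu>_range: "0 < \<mu>" "\<mu> < 1"
    and \<mu>_mixing: "\<exists>\<phi> :: nat \<Rightarrow> nat \<Rightarrow> real. \<forall>t. stoch_vec n (\<phi> t) \<and>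
                   (\<forall>s i j. 1 \<le> s \<longrightarrow> s \<le> t \<longrightarrow> i < n \<longrightarrow> j < n \<longrightarrow>
                      \<bar>PhiW n w (t + 1) s i j - \<phi> t i\<bar> \<le> 4 * \<mu> ^ (t - s))"
begin

lemma lambar_pos: "0 < lambar"
  unfolding lambar_def using n_pos lam_pos by (intro divide_pos_pos sum_pos) auto

lemma sum_lam: "(\<Sum>i<n. lam i) = real n * lambar"
  unfolding lambar_def using n_pos by simp

lemma upper: "i < n \<Longrightarrow> f i u - f i v \<le> grad i v \<bullet> (u - v) + \<bar>gam i\<bar> * (norm (u - v))\<^sup>2"
proof -
  assume i: "i < n"
  have "f i v - f i u \<ge> grad i u \<bullet> (v - u) + lam i / 2 * (norm (v - u))\<^sup>2" using f_sconv[OF i] .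
  moreover have "0 \<le> lam i / 2 * (norm (v - u))\<^sup>2" using lam_pos[OF i] by simp
  ultimately have a: "f i u - f i v \<le> grad i u \<bullet> (u - v)" by (simp add: inner_diff_right)
  have "grad i u \<bullet> (u - v) = grad i v \<bullet> (u - v) + (grad i u - grad i v) \<bullet> (u - v)"
    by (simp add: inner_diff_left)
  also have "(grad i u - grad i v) \<bullet> (u - v) \<le> norm (grad i u - grad i v) * norm (u - v)"
    by (rule norm_cauchy_schwarz)
  also have "norm (grad i u - grad i v) * norm (u - v) \<le> \<bar>gam i\<bar> * norm (u - v) * norm (u - v)"
  proof (rule mult_right_mono)
    show "norm (grad i u - grad i v) \<le> \<bar>gam i\<bar> * norm (u - v)"
      using f_smooth[OF i, of u v] by (rule order_trans) (simp add: mult_right_mono)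
  qed simp
  finally show ?thesis using a by (simp add: power2_eq_square mult.assoc)
qed

lemma grad_sum_zero: "(\<Sum>i<n. grad i zstar) = 0"
proof (rule ccontr)
  define d where "d = (\<Sum>i<n. grad i zstar)"
  assume "(\<Sum>i<n. grad i zstar) \<noteq> 0"
  then have d0: "d \<noteq> 0" by (simp add: d_def)
  define \<Gamma> where "\<Gamma> = (\<Sum>i<n. \<bar>gam i\<bar>)"
  have \<Gamma>0: "0 \<le> \<Gamma>" unfolding \<Gamma>_def by (intro sum_nonneg) auto
  define s where "s = 1 / (\<Gamma> + 1)"
  have s0: "0 < s" using \<Gamma>0 by (simp add: s_def)
  define v where "v = zstar - s *\<^sub>R d"
  have vz: "v - zstar = - (s *\<^sub>R d)" by (simp add: v_def)
  have "(\<Sum>i<n. f i v - f i zstar) \<le> (\<Sum>i<n. grad i zstar \<bullet> (v - zstar) + \<bar>gam i\<bar> * (norm (v - zstar))\<^sup>2)"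
    by (rule sum_mono) (rule upper, simp)
  also have "\<dots> = d \<bullet> (v - zstar) + \<Gamma> * (norm (v - zstar))\<^sup>2"
    by (simp add: d_def \<Gamma>_def sum.distrib inner_sum_left sum_distrib_right)
  also have "\<dots> = - s * (norm d)\<^sup>2 + \<Gamma> * s\<^sup>2 * (norm d)\<^sup>2"
    using s0 by (simp add: vz power2_norm_eq_inner[symmetric] power_mult_distrib)
  also have "\<dots> = - s * (norm d)\<^sup>2 * (1 - \<Gamma> * s)" by (simp add: algebra_simps power2_eq_square)
  also have "\<dots> < 0"
  proof -
    have "1 - \<Gamma> * s = s" using \<Gamma>0 by (simp add: s_def field_simps)
    then show ?thesis using s0 d0 by simp
  qed
  finally have "(\<Sum>i<n. f i v) < (\<Sum>i<n. f i zstar)" by (simp add: sum_subtractf)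
  moreover have "v \<noteq> zstar" using s0 d0 vz by auto
  then have "(\<Sum>i<n. f i zstar) / real n < (\<Sum>i<n. f i v) / real n" by (rule zstar_min)
  then have "(\<Sum>i<n. f i zstar) < (\<Sum>i<n. f i v)" using n_pos by (simp add: divide_strict_right_mono_neg divide_less_cancel)
  ultimately show False by simp
qed

lemma avg_bound:
  assumes gp: "\<And>i. i < n \<Longrightarrow> norm (grad i p) \<le> G"
  shows "norm (p - zstar) \<le> G / lambar"
proof -
  have mono: "lam i * (norm (p - zstar))\<^sup>2 \<le> (grad i p - grad i zstar) \<bullet> (p - zstar)" if i: "i < n" for i
  proof -
    have "f i p - f i zstar \<ge> grad i zstar \<bullet> (p - zstar) + lam i / 2 * (norm (p - zstar))\<^sup>2" using f_sconv[OF i] .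
    moreover have "f i zstar - f i p \<ge> grad i p \<bullet> (zstar - p) + lam i / 2 * (norm (zstar - p))\<^sup>2" using f_sconv[OF i] .
    ultimately show ?thesis by (simp add: inner_diff_left inner_diff_right norm_minus_commute algebra_simps)
  qed
  have "(\<Sum>i<n. lam i * (norm (p - zstar))\<^sup>2) \<le> (\<Sum>i<n. (grad i p - grad i zstar) \<bullet> (p - zstar))"
    by (rule sum_mono) (use mono in simp)
  also have "\<dots> = (\<Sum>i<n. grad i p) \<bullet> (p - zstar)"
    by (simp add: inner_sum_left[symmetric] sum_subtractf grad_sum_zero inner_diff_left)
  also have "\<dots> \<le> norm (\<Sum>i<n. grad i p) * norm (p - zstar)" by (rule norm_cauchy_schwarz)
  also have "\<dots> \<le> (real n * G) * norm (p - zstar)"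
  proof (rule mult_right_mono)
    have "norm (\<Sum>i<n. grad i p) \<le> (\<Sum>i<n. norm (grad i p))" by (rule norm_sum)
    also have "\<dots> \<le> (\<Sum>i<n. G)" by (rule sum_mono) (use gp in simp)
    finally show "norm (\<Sum>i<n. grad i p) \<le> real n * G" by simp
  qed simp
  finally have *: "real n * lambar * (norm (p - zstar))\<^sup>2 \<le> real n * G * norm (p - zstar)"
    by (simp add: sum_distrib_right[symmetric] sum_lam)
  show ?thesis
  proof (cases "norm (p - zstar) = 0")
    case True then show ?thesis using G_pos lambar_pos by simp
  next
    case False
    then have pos: "0 < real n * norm (p - zstar)" using n_pos by simp
    have "(real n * norm (p - zstar)) * (lambar * norm (p - zstar)) \<le> (real n * norm (p - zstar)) * G"
      using * by (simp add: power2_eq_square algebra_simps)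
    then have "lambar * norm (p - zstar) \<le> G" using pos by (simp add: mult_le_cancel_left_pos)
    then show ?thesis using lambar_pos by (simp add: field_simps)
  qed
qed

lemma cross_bound:
  assumes gq: "\<And>j. j < n \<Longrightarrow> norm (grad j (q j)) \<le> G"
    and gp: "\<And>j. j < n \<Longrightarrow> norm (grad j p) \<le> G"
  shows "(\<Sum>j<n. grad j (q j) \<bullet> (p - zstar)) \<ge>
           real n * lambar / 2 * (norm (p - zstar))\<^sup>2 - 2 * G * (\<Sum>j<n. norm (q j - p))"
proof -
  have each: "grad j (q j) \<bullet> (p - zstar) \<ge> grad j zstar \<bullet> (p - zstar) + lam j / 2 * (norm (p - zstar))\<^sup>2
        - 2 * G * norm (q j - p)" if j: "j < n" for j
  proof -
    have e1: "f j zstar - f j (q j) \<ge> grad j (q j) \<bullet> (zstar - q j) + lam j / 2 * (norm (zstar - q j))\<^sup>2"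
      using f_sconv[OF j] .
    have e2: "f j (q j) - f j p \<ge> grad j p \<bullet> (q j - p) + lam j / 2 * (norm (q j - p))\<^sup>2"
      using f_sconv[OF j] .
    have e3: "f j p - f j zstar \<ge> grad j zstar \<bullet> (p - zstar) + lam j / 2 * (norm (p - zstar))\<^sup>2"
      using f_sconv[OF j] .
    have l: "0 \<le> lam j" using lam_pos[OF j] by simp
    have c1: "\<bar>grad j (q j) \<bullet> (p - q j)\<bar> \<le> G * norm (q j - p)"
    proof -
      have "\<bar>grad j (q j) \<bullet> (p - q j)\<bar> \<le> norm (grad j (q j)) * norm (p - q j)" by (rule Cauchy_Schwarz_ineq2)
      also have "\<dots> \<le> G * norm (q j - p)" using gq[OF j] by (simp add: norm_minus_commute mult_right_mono)
      finally show ?thesis .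
    qed
    have c2: "\<bar>grad j p \<bullet> (q j - p)\<bar> \<le> G * norm (q j - p)"
    proof -
      have "\<bar>grad j p \<bullet> (q j - p)\<bar> \<le> norm (grad j p) * norm (q j - p)" by (rule Cauchy_Schwarz_ineq2)
      also have "\<dots> \<le> G * norm (q j - p)" using gp[OF j] by (simp add: mult_right_mono)
      finally show ?thesis .
    qed
    have "grad j (q j) \<bullet> (p - zstar) = grad j (q j) \<bullet> (q j - zstar) + grad j (q j) \<bullet> (p - q j)"
      by (simp add: inner_diff_right)
    moreover have "0 \<le> lam j / 2 * (norm (zstar - q j))\<^sup>2" "0 \<le> lam j / 2 * (norm (q j - p))\<^sup>2" using l by auto
    ultimately show ?thesis using e1 e2 e3 c1 c2
      by (simp add: inner_diff_right abs_le_iff)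
  qed
  have "(\<Sum>j<n. grad j (q j) \<bullet> (p - zstar)) \<ge> (\<Sum>j<n. grad j zstar \<bullet> (p - zstar) + lam j / 2 * (norm (p - zstar))\<^sup>2
        - 2 * G * norm (q j - p))"
    by (rule sum_mono) (use each in simp)
  moreover have "(\<Sum>j<n. grad j zstar \<bullet> (p - zstar) + lam j / 2 * (norm (p - zstar))\<^sup>2 - 2 * G * norm (q j - p))
      = real n * lambar / 2 * (norm (p - zstar))\<^sup>2 - 2 * G * (\<Sum>j<n. norm (q j - p))"
  proof -
    have "(\<Sum>j<n. grad j zstar \<bullet> (p - zstar)) = 0"
      using grad_sum_zero by (simp add: inner_sum_left[symmetric])
    moreover have "(\<Sum>j<n. lam j / 2 * (norm (p - zstar))\<^sup>2) = real n * lambar / 2 * (norm (p - zstar))\<^sup>2"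
      using sum_lam by (simp add: sum_distrib_right[symmetric] sum_divide_distrib[symmetric])
    ultimately show ?thesis by (simp add: sum.distrib sum_subtractf sum_distrib_left)
  qed
  ultimately show ?thesis by simp
qed

end

context sgp begin

definition "xb t \<omega> = (1 / real n) *\<^sub>R (\<Sum>k<n. x k t \<omega>)"
definition "gb t \<omega> = (1 / real n) *\<^sub>R (\<Sum>j<n. gt j t \<omega>)"
definition "u j \<omega> = x j 1 \<omega> - \<alpha> 1 *\<^sub>R gt j 1 \<omega>"

lemma x_meas_all: "1 \<le> t \<Longrightarrow> i < n \<Longrightarrow> x i t \<in> borel_measurable M"
proof (induction t arbitrary: i rule: nat_induct_at_least)
  case base then show ?case using x_meas by simp
next
  case (Suc t)
  have eq: "x i (Suc t) = (\<lambda>\<omega>. \<Sum>j<n. w t i j *\<^sub>R (x j t \<omega> - \<alpha> t *\<^sub>R gt j t \<omega>))"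
    using x_step[of i t] Suc by auto
  have [measurable]: "\<And>j. j \<in> {..<n} \<Longrightarrow> x j t \<in> borel_measurable M" using Suc by auto
  have [measurable]: "\<And>j. j \<in> {..<n} \<Longrightarrow> gt j t \<in> borel_measurable M" using Suc gt_meas by auto
  show ?case unfolding eq by measurable
qed

lemma gt_norm_int: "i < n \<Longrightarrow> 1 \<le> t \<Longrightarrow> integrable M (\<lambda>\<omega>. norm (gt i t \<omega>))"
proof -
  assume a: "i < n" "1 \<le> t"
  interpret prob_space M by (rule prob)
  show ?thesis
    by (rule square_integrable_imp_integrable) (use G_sq[OF a] gt_meas[OF a] in auto)
qed

lemma gt_int: "i < n \<Longrightarrow> 1 \<le> t \<Longrightarrow> integrable M (gt i t)"
  using gt_norm_int gt_meas integrable_norm_iff by blast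

lemma gt_norm_le: "i < n \<Longrightarrow> 1 \<le> t \<Longrightarrow> integral\<^sup>L M (\<lambda>\<omega>. norm (gt i t \<omega>)) \<le> G"
proof -
  assume a: "i < n" "1 \<le> t"
  interpret prob_space M by (rule prob)
  have pt: "norm (gt i t \<omega>) \<le> ((norm (gt i t \<omega>))\<^sup>2 + G\<^sup>2) / (2 * G)" for \<omega>
  proof -
    have "0 \<le> (norm (gt i t \<omega>) - G)\<^sup>2" by simp
    then have "2 * G * norm (gt i t \<omega>) \<le> (norm (gt i t \<omega>))\<^sup>2 + G\<^sup>2" by (simp add: power2_eq_square algebra_simps)
    then show ?thesis using G_pos by (simp add: field_simps)
  qed
  have "integral\<^sup>L M (\<lambda>\<omega>. norm (gt i t \<omega>)) \<le> integral\<^sup>L M (\<lambda>\<omega>. ((norm (gt i t \<omega>))\<^sup>2 + G\<^sup>2) / (2 * G))"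
    by (rule integral_mono) (use gt_norm_int[OF a] G_sq[OF a] pt in auto)
  also have "\<dots> = (integral\<^sup>L M (\<lambda>\<omega>. (norm (gt i t \<omega>))\<^sup>2) + G\<^sup>2) / (2 * G)"
    using G_sq[OF a] by (simp add: prob_space)
  also have "\<dots> \<le> (G\<^sup>2 + G\<^sup>2) / (2 * G)" using G_sq[OF a] G_pos by (intro divide_right_mono) auto
  also have "\<dots> = G" using G_pos by (simp add: power2_eq_square)
  finally show ?thesis .
qed

lemma x_int: "1 \<le> t \<Longrightarrow> i < n \<Longrightarrow> integrable M (x i t)"
proof (induction t arbitrary: i rule: nat_induct_at_least)
  case base then show ?case using x1_int x_meas integrable_norm_iff by blast
next
  case (Suc t)
  have eq: "x i (Suc t) = (\<lambda>\<omega>. \<Sum>j<n. w t i j *\<^sub>R (x j t \<omega> - \<alpha> t *\<^sub>R gt j t \<omega>))"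
    using x_step[of i t] Suc by auto
  show ?case unfolding eq by (intro Bochner_Integration.integrable_sum Bochner_Integration.integrable_scaleR_right Bochner_Integration.integrable_diff) (use Suc gt_int in auto)
qed

lemma xb_step: "1 \<le> t \<Longrightarrow> xb (t + 1) \<omega> = xb t \<omega> - \<alpha> t *\<^sub>R gb t \<omega>"
proof -
  assume t: "1 \<le> t"
  have "(\<Sum>i<n. x i (t + 1) \<omega>) = (\<Sum>i<n. \<Sum>j<n. w t i j *\<^sub>R (x j t \<omega> - \<alpha> t *\<^sub>R gt j t \<omega>))"
    using x_step t by simp
  also have "\<dots> = (\<Sum>j<n. \<Sum>i<n. w t i j *\<^sub>R (x j t \<omega> - \<alpha> t *\<^sub>R gt j t \<omega>))" by (rule sum.swap)
  also have "\<dots> = (\<Sum>j<n. (x j t \<omega> - \<alpha> t *\<^sub>R gt j t \<omega>))"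
    by (rule sum.cong) (simp_all add: scaleR_sum_left[symmetric] w_colsum)
  finally show ?thesis
    by (simp add: xb_def gb_def sum_subtractf scaleR_sum_right[symmetric] scaleR_right_diff_distrib)
qed

lemma xb_formula: "1 \<le> t \<Longrightarrow> xb (t + 1) \<omega> =
    (1 / real n) *\<^sub>R ((\<Sum>j<n. u j \<omega>) - (\<Sum>s\<in>{2..t}. \<alpha> s *\<^sub>R (\<Sum>j<n. gt j s \<omega>)))"
proof (induction t rule: nat_induct_at_least)
  case base
  show ?case using xb_step[of 1 \<omega>]
    by (simp add: xb_def gb_def u_def sum_subtractf scaleR_sum_right[symmetric] scaleR_right_diff_distrib)
next
  case (Suc t)
  have ins: "{2..Suc t} = insert (Suc t) {2..t}" using Suc by auto
  have "xb (Suc t + 1) \<omega> = xb (t + 1) \<omega> - \<alpha> (t + 1) *\<^sub>R gb (t + 1) \<omega>" using xb_step[of "t + 1" \<omega>] by simp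
  also have "xb (t + 1) \<omega> = (1 / real n) *\<^sub>R ((\<Sum>j<n. u j \<omega>) - (\<Sum>s\<in>{2..t}. \<alpha> s *\<^sub>R (\<Sum>j<n. gt j s \<omega>)))"
    using Suc by simp
  also have "(1 / real n) *\<^sub>R ((\<Sum>j<n. u j \<omega>) - (\<Sum>s\<in>{2..t}. \<alpha> s *\<^sub>R (\<Sum>j<n. gt j s \<omega>))) - \<alpha> (t + 1) *\<^sub>R gb (t + 1) \<omega>
      = (1 / real n) *\<^sub>R ((\<Sum>j<n. u j \<omega>) - (\<Sum>s\<in>{2..Suc t}. \<alpha> s *\<^sub>R (\<Sum>j<n. gt j s \<omega>)))"
    by (simp add: ins gb_def scaleR_right_diff_distrib scaleR_right_distrib algebra_simps)
  finally show ?case by simp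
qed

lemma x_expand: "1 \<le> t \<Longrightarrow> i < n \<Longrightarrow> x i (t + 1) \<omega> = (\<Sum>j<n. PhiW n w (t + 1) 1 i j *\<^sub>R u j \<omega>)
          - (\<Sum>s\<in>{2..t}. \<Sum>j<n. (\<alpha> s * PhiW n w (t + 1) s i j) *\<^sub>R gt j s \<omega>)"
  using expand[of n "\<lambda>i t. x i t \<omega>" w \<alpha> "\<lambda>j s. gt j s \<omega>" t i] x_step unfolding u_def by blast

lemma y_expand: "1 \<le> t \<Longrightarrow> i < n \<Longrightarrow> y i (t + 1) = (\<Sum>j<n. PhiW n w (t + 1) 1 i j)"
  using expand[of n "\<lambda>i t. y i t" w "\<lambda>_. 0" "\<lambda>j s. 0" t i] y_step y_1 by simp

lemma zx_bound:
  assumes t: "1 \<le> t" and i: "i < n"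
  shows "norm (z i (t + 1) \<omega> - xb (t + 1) \<omega>) \<le> (1 / \<eta>) * (8 * \<mu> ^ (t - 1) * (\<Sum>j<n. norm (u j \<omega>))
           + (\<Sum>s\<in>{2..t}. 8 * \<mu> ^ (t - s) * \<alpha> s * (\<Sum>j<n. norm (gt j s \<omega>))))"
proof -
  obtain \<phi> :: "nat \<Rightarrow> nat \<Rightarrow> real" where phi: "\<And>s i j. 1 \<le> s \<Longrightarrow> s \<le> t \<Longrightarrow> i < n \<Longrightarrow> j < n \<Longrightarrow>
      \<bar>PhiW n w (t + 1) s i j - \<phi> t i\<bar> \<le> 4 * \<mu> ^ (t - s)"
    using \<mu>_mixing by blast
  define Xi where "Xi = x i (t + 1) \<omega>"
  define Yi where "Yi = y i (t + 1)"
  have Y: "\<eta> \<le> Yi" using \<eta>_bound[OF i, of "t + 1"] by (simp add: Yi_def)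
  have Ypos: "0 < Yi" using Y \<eta>_pos by simp
  have main: "norm (Xi - Yi *\<^sub>R xb (t + 1) \<omega>) \<le> 8 * \<mu> ^ (t - 1) * (\<Sum>j<n. norm (u j \<omega>))
           + (\<Sum>s\<in>{2..t}. 8 * \<mu> ^ (t - s) * \<alpha> s * (\<Sum>j<n. norm (gt j s \<omega>)))"
  proof (rule consensus[OF n_pos t])
    show "Xi = (\<Sum>j<n. PhiW n w (t + 1) 1 i j *\<^sub>R u j \<omega>) - (\<Sum>s\<in>{2..t}. \<Sum>j<n. (\<alpha> s * PhiW n w (t + 1) s i j) *\<^sub>R gt j s \<omega>)"
      unfolding Xi_def by (rule x_expand[OF t i])
    show "Yi = (\<Sum>j<n. PhiW n w (t + 1) 1 i j)" unfolding Yi_def by (rule y_expand[OF t i])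
    show "xb (t + 1) \<omega> = (1 / real n) *\<^sub>R ((\<Sum>j<n. u j \<omega>) - (\<Sum>s\<in>{2..t}. \<alpha> s *\<^sub>R (\<Sum>j<n. gt j s \<omega>)))"
      by (rule xb_formula[OF t])
    show "\<bar>PhiW n w (t + 1) s i j - \<phi> t i\<bar> \<le> 4 * \<mu> ^ (t - s)" if "1 \<le> s" "s \<le> t" "j < n" for s j
      using phi[OF that(1,2) i that(3)] .
    show "0 \<le> \<alpha> s" if "s \<in> {2..t}" for s using that \<alpha>_def[of s] lambar_pos by simp
  qed (use \<mu>_range in auto)
  have "z i (t + 1) \<omega> - xb (t + 1) \<omega> = (1 / Yi) *\<^sub>R (Xi - Yi *\<^sub>R xb (t + 1) \<omega>)"
    using Ypos by (simp add: z_def Xi_def Yi_def scaleR_right_diff_distrib)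
  then have "norm (z i (t + 1) \<omega> - xb (t + 1) \<omega>) = norm (Xi - Yi *\<^sub>R xb (t + 1) \<omega>) / Yi"
    using Ypos by simp
  also have "\<dots> \<le> norm (Xi - Yi *\<^sub>R xb (t + 1) \<omega>) / \<eta>"
    using Y \<eta>_pos by (intro divide_left_mono) auto
  also have "\<dots> \<le> (8 * \<mu> ^ (t - 1) * (\<Sum>j<n. norm (u j \<omega>))
           + (\<Sum>s\<in>{2..t}. 8 * \<mu> ^ (t - s) * \<alpha> s * (\<Sum>j<n. norm (gt j s \<omega>)))) / \<eta>"
    using main \<eta>_pos by (intro divide_right_mono) auto
  finally show ?thesis by simp
qed

end

context sgp begin

lemma grad_meas: "i < n \<Longrightarrow> grad i \<in> borel_measurable borel"
proof -
  assume i: "i < n"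
  have "\<bar>gam i\<bar>-lipschitz_on UNIV (grad i)"
  proof (rule lipschitz_onI)
    fix u v :: 'v
    have "norm (grad i u - grad i v) \<le> gam i * norm (u - v)" using f_smooth[OF i] .
    also have "\<dots> \<le> \<bar>gam i\<bar> * norm (u - v)" by (rule mult_right_mono) auto
    finally show "dist (grad i u) (grad i v) \<le> \<bar>gam i\<bar> * dist u v" by (simp add: dist_norm)
  qed simp
  then have "continuous_on UNIV (grad i)" by (rule lipschitz_on_continuous_on)
  then show ?thesis by (rule borel_measurable_continuous_onI)
qed

lemma xb_meas: "1 \<le> t \<Longrightarrow> xb t \<in> borel_measurable M"
proof -
  assume t: "1 \<le> t"
  have [measurable]: "\<And>k. k \<in> {..<n} \<Longrightarrow> x k t \<in> borel_measurable M" using x_meas_all t by auto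
  show ?thesis unfolding xb_def[abs_def] by measurable
qed

lemma z_meas: "i < n \<Longrightarrow> 1 \<le> t \<Longrightarrow> z i t \<in> borel_measurable M"
proof -
  assume a: "i < n" "1 \<le> t"
  have [measurable]: "x i t \<in> borel_measurable M" using x_meas_all a by auto
  show ?thesis unfolding z_def by measurable
qed

lemma z_int: "i < n \<Longrightarrow> 1 \<le> t \<Longrightarrow> integrable M (z i t)"
  unfolding z_def using x_int by (intro Bochner_Integration.integrable_scaleR_right) auto

lemma xb_int: "1 \<le> t \<Longrightarrow> integrable M (xb t)"
  unfolding xb_def[abs_def] using x_int
  by (intro Bochner_Integration.integrable_scaleR_right Bochner_Integration.integrable_sum) auto

lemma AE_grad_avg: "1 \<le> t \<Longrightarrow> AE \<omega> in M. \<forall>i\<in>{..<n}. norm (grad i (xb t \<omega>)) \<le> G"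
  unfolding xb_def by (rule eventually_ball_finite) (use G_grad_avg in auto)

lemma AE_grad_z: "1 \<le> t \<Longrightarrow> AE \<omega> in M. \<forall>i\<in>{..<n}. norm (grad i (z i t \<omega>)) \<le> G"
  by (rule eventually_ball_finite) (use G_grad_z in auto)

lemma xb_bound: "1 \<le> t \<Longrightarrow> AE \<omega> in M. norm (xb t \<omega> - zstar) \<le> G / lambar"
proof -
  assume t: "1 \<le> t"
  show ?thesis using AE_grad_avg[OF t] by eventually_elim (rule avg_bound, auto)
qed

lemma e_meas: "1 \<le> t \<Longrightarrow> (\<lambda>\<omega>. (norm (xb t \<omega> - zstar))\<^sup>2) \<in> borel_measurable M"
proof -
  assume t: "1 \<le> t"
  have [measurable]: "xb t \<in> borel_measurable M" using xb_meas[OF t] .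
  show ?thesis by measurable
qed

lemma e_int: "1 \<le> t \<Longrightarrow> integrable M (\<lambda>\<omega>. (norm (xb t \<omega> - zstar))\<^sup>2)"
proof -
  assume t: "1 \<le> t"
  interpret prob_space M by (rule prob)
  show ?thesis
  proof (rule integrable_const_bound[where B = "(G / lambar)\<^sup>2"])
    show "AE x in M. norm ((norm (xb t x - zstar))\<^sup>2) \<le> (G / lambar)\<^sup>2"
      using xb_bound[OF t] by eventually_elim (simp add: power_mono)
  qed (rule e_meas[OF t])
qed

lemma e_le: "1 \<le> t \<Longrightarrow> integral\<^sup>L M (\<lambda>\<omega>. (norm (xb t \<omega> - zstar))\<^sup>2) \<le> (G / lambar)\<^sup>2"
proof -
  assume t: "1 \<le> t"
  interpret prob_space M by (rule prob)
  have "integral\<^sup>L M (\<lambda>\<omega>. (norm (xb t \<omega> - zstar))\<^sup>2) \<le> integral\<^sup>L M (\<lambda>\<omega>. (G / lambar)\<^sup>2)"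
    by (rule integral_mono_AE) (use e_int[OF t] xb_bound[OF t] in \<open>auto elim!: eventually_mono simp: power_mono\<close>)
  then show ?thesis by (simp add: prob_space)
qed

lemma Nz_eq: "i < n \<Longrightarrow> 1 \<le> t \<Longrightarrow> N i t \<omega> (z i t \<omega>) = gt i t \<omega> - grad i (z i t \<omega>)"
  using gt_def by simp

lemma Nz_meas: "i < n \<Longrightarrow> 1 \<le> t \<Longrightarrow> (\<lambda>\<omega>. N i t \<omega> (z i t \<omega>)) \<in> borel_measurable M"
proof -
  assume a: "i < n" "1 \<le> t"
  have [measurable]: "gt i t \<in> borel_measurable M" using gt_meas a by auto
  have [measurable]: "z i t \<in> borel_measurable M" using z_meas a by auto
  have [measurable]: "grad i \<in> borel_measurable borel" using grad_meas a by auto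
  have "(\<lambda>\<omega>. gt i t \<omega> - grad i (z i t \<omega>)) \<in> borel_measurable M" by measurable
  then show ?thesis using Nz_eq[OF a] by simp
qed

lemma noise_zero:
  assumes i: "i < n" and t: "1 \<le> t"
  shows "integral\<^sup>L M (\<lambda>\<omega>. N i t \<omega> (z i t \<omega>) \<bullet> (xb t \<omega> - zstar)) = 0"
proof -
  define Xs where "Xs = {x i s | i s. i < n \<and> 1 \<le> s \<and> s \<le> t} \<union> {gt i s | i s. i < n \<and> 1 \<le> s \<and> s < t}"
  define Gen where "Gen = (\<Union>X\<in>Xs. {X -` B \<inter> space M | B. B \<in> sets (borel :: 'v measure)})"
  define F where "F = sigma (space M) Gen"
  have GP: "Gen \<subseteq> Pow (space M)" unfolding Gen_def by auto
  have sF0: "sets F = sigma_sets (space M) Gen" unfolding F_def using GP by (simp add: sets_measure_of)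
  have sF: "sets F = hist M n x gt t"
    unfolding sF0 hist_def gen_events_def Gen_def Xs_def ..
  have spF: "space F = space M" unfolding F_def by (simp add: space_measure_of_conv)
  have GM: "Gen \<subseteq> sets M"
  proof
    fix A assume "A \<in> Gen"
    then obtain X B where X: "X \<in> Xs" and B: "B \<in> sets borel" and A: "A = X -` B \<inter> space M"
      unfolding Gen_def by auto
    have "X \<in> borel_measurable M" using X x_meas_all gt_meas unfolding Xs_def by auto
    then show "A \<in> sets M" using A B by (simp add: measurable_sets)
  qed
  have sub: "subalgebra M F"
    unfolding subalgebra_def spF sF0 using sets.sigma_sets_subset[OF GM] by simp
  have xF: "x k t \<in> borel_measurable F" if k: "k < n" for k
  proof (rule measurableI)
    fix B :: "'v set" assume B: "B \<in> sets borel"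
    have "x k t \<in> Xs" unfolding Xs_def using k t by auto
    then have "x k t -` B \<inter> space M \<in> Gen" unfolding Gen_def using B by blast
    then show "x k t -` B \<inter> space F \<in> sets F" unfolding spF F_def using GP
      by (simp add: sets_measure_of sigma_sets.Basic)
  qed simp
  have YF: "(\<lambda>\<omega>. xb t \<omega> - zstar) \<in> borel_measurable F"
  proof -
    have [measurable]: "\<And>k. k \<in> {..<n} \<Longrightarrow> x k t \<in> borel_measurable F" using xF by auto
    show ?thesis unfolding xb_def by measurable
  qed
  show ?thesis
  proof (rule zero_mean_vec[OF prob sub])
    show "(\<lambda>\<omega>. N i t \<omega> (z i t \<omega>)) \<in> borel_measurable M" using Nz_meas[OF i t] .
    show "AE \<omega> in M. norm (N i t \<omega> (z i t \<omega>)) \<le> c i" using N_bdd[OF i t] by eventually_elim auto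
    show "(\<lambda>\<omega>. xb t \<omega> - zstar) \<in> borel_measurable F" by (rule YF)
    show "AE \<omega> in M. norm (xb t \<omega> - zstar) \<le> G / lambar" by (rule xb_bound[OF t])
    fix A assume "A \<in> sets F"
    then show "(\<integral>\<omega>\<in>A. N i t \<omega> (z i t \<omega>) \<partial>M) = 0" using N_zero_mean[OF i t] sF by simp
  qed
qed

lemma pt_step:
  assumes t: "1 \<le> t"
    and gz: "\<forall>j\<in>{..<n}. norm (grad j (z j t \<omega>)) \<le> G"
    and ga: "\<forall>i\<in>{..<n}. norm (grad i (xb t \<omega>)) \<le> G"
  shows "(norm (xb (t + 1) \<omega> - zstar))\<^sup>2 \<le> (1 - \<alpha> t * lambar) * (norm (xb t \<omega> - zstar))\<^sup>2
      + (4 * \<alpha> t * G / real n) * (\<Sum>j<n. norm (z j t \<omega> - xb t \<omega>))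
      - (2 * \<alpha> t / real n) * (\<Sum>j<n. N j t \<omega> (z j t \<omega>) \<bullet> (xb t \<omega> - zstar))
      + ((\<alpha> t)\<^sup>2 / real n) * (\<Sum>j<n. (norm (gt j t \<omega>))\<^sup>2)"
proof -
  define d where "d = xb t \<omega> - zstar"
  define a where "a = \<alpha> t"
  define gv where "gv = gb t \<omega>"
  define S1 where "S1 = (\<Sum>j<n. grad j (z j t \<omega>) \<bullet> d)"
  define S2 where "S2 = (\<Sum>j<n. N j t \<omega> (z j t \<omega>) \<bullet> d)"
  define S3 where "S3 = (\<Sum>j<n. norm (z j t \<omega> - xb t \<omega>))"
  define S4 where "S4 = (\<Sum>j<n. (norm (gt j t \<omega>))\<^sup>2)"
  have a0: "0 \<le> a" unfolding a_def using \<alpha>_def[OF t] lambar_pos by simp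
  have nn: "0 < real n" using n_pos by simp
  have e1: "xb (t + 1) \<omega> - zstar = d - a *\<^sub>R gv" unfolding d_def a_def gv_def using xb_step[OF t] by simp
  have e2: "(norm (d - a *\<^sub>R gv))\<^sup>2 = (norm d)\<^sup>2 - 2 * a * (gv \<bullet> d) + a\<^sup>2 * (norm gv)\<^sup>2"
    unfolding power2_norm_eq_inner by (simp add: inner_diff_left inner_diff_right inner_commute power2_eq_square algebra_simps)
  have e3: "gv \<bullet> d = (S1 + S2) / real n"
  proof -
    have "gv \<bullet> d = (1 / real n) * (\<Sum>j<n. gt j t \<omega> \<bullet> d)" unfolding gv_def gb_def by (simp add: inner_sum_left)
    also have "(\<Sum>j<n. gt j t \<omega> \<bullet> d) = S1 + S2"
      unfolding S1_def S2_def sum.distrib[symmetric]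
    proof (rule sum.cong[OF refl])
      fix j assume "j \<in> {..<n}"
      then have "gt j t \<omega> = grad j (z j t \<omega>) + N j t \<omega> (z j t \<omega>)" using gt_def t by simp
      then show "gt j t \<omega> \<bullet> d = grad j (z j t \<omega>) \<bullet> d + N j t \<omega> (z j t \<omega>) \<bullet> d"
        by (simp add: inner_add_left)
    qed
    finally show ?thesis by simp
  qed
  have e4: "S1 \<ge> real n * lambar / 2 * (norm d)\<^sup>2 - 2 * G * S3"
    unfolding S1_def S3_def d_def by (rule cross_bound) (use gz ga in auto)
  have e5: "(norm gv)\<^sup>2 \<le> S4 / real n"
  proof -
    have "norm gv \<le> (1 / real n) * (\<Sum>j<n. norm (gt j t \<omega>))"
      unfolding gv_def gb_def using norm_sum[of "\<lambda>j. gt j t \<omega>" "{..<n}"] nn by (simp add: divide_right_mono)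
    then have "(norm gv)\<^sup>2 \<le> ((1 / real n) * (\<Sum>j<n. norm (gt j t \<omega>)))\<^sup>2"
      by (rule power_mono) simp
    also have "\<dots> = (\<Sum>j<n. norm (gt j t \<omega>) * 1)\<^sup>2 / (real n)\<^sup>2" by (simp add: power_divide)
    also have "\<dots> \<le> (S4 * real n) / (real n)\<^sup>2"
    proof (rule divide_right_mono)
      show "(\<Sum>j<n. norm (gt j t \<omega>) * 1)\<^sup>2 \<le> S4 * real n"
        using Cauchy_Schwarz_ineq_sum[of "\<lambda>j. norm (gt j t \<omega>)" "\<lambda>j. 1" "{..<n}"] by (simp add: S4_def)
    qed simp
    also have "\<dots> = S4 / real n" using nn by (simp add: power2_eq_square)
    finally show ?thesis .
  qed
  have "(norm (xb (t + 1) \<omega> - zstar))\<^sup>2 = (norm d)\<^sup>2 - 2 * a * ((S1 + S2) / real n) + a\<^sup>2 * (norm gv)\<^sup>2"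
    unfolding e1 e2 e3 ..
  also have "\<dots> \<le> (norm d)\<^sup>2 - 2 * a * ((real n * lambar / 2 * (norm d)\<^sup>2 - 2 * G * S3 + S2) / real n) + a\<^sup>2 * (S4 / real n)"
  proof -
    have "2 * a * ((real n * lambar / 2 * (norm d)\<^sup>2 - 2 * G * S3 + S2) / real n) \<le> 2 * a * ((S1 + S2) / real n)"
      using e4 a0 nn by (intro mult_left_mono divide_right_mono) auto
    moreover have "a\<^sup>2 * (norm gv)\<^sup>2 \<le> a\<^sup>2 * (S4 / real n)" using e5 by (rule mult_left_mono) simp
    ultimately show ?thesis by simp
  qed
  also have "\<dots> = (1 - a * lambar) * (norm d)\<^sup>2 + (4 * a * G / real n) * S3 - (2 * a / real n) * S2 + (a\<^sup>2 / real n) * S4"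
    using nn by (simp add: field_simps)
  finally show ?thesis unfolding a_def S2_def S3_def S4_def d_def .
qed

definition "ea t = integral\<^sup>L M (\<lambda>\<omega>. (norm (xb t \<omega> - zstar))\<^sup>2)"

lemma Nd_int: "j < n \<Longrightarrow> 1 \<le> t \<Longrightarrow> integrable M (\<lambda>\<omega>. N j t \<omega> (z j t \<omega>) \<bullet> (xb t \<omega> - zstar))"
proof -
  assume j: "j < n" and t: "1 \<le> t"
  interpret prob_space M by (rule prob)
  have [measurable]: "(\<lambda>\<omega>. N j t \<omega> (z j t \<omega>)) \<in> borel_measurable M" using Nz_meas[OF j t] .
  have [measurable]: "xb t \<in> borel_measurable M" using xb_meas[OF t] .
  show ?thesis
  proof (rule integrable_const_bound[where B = "c j * (G / lambar)"])
    show "AE \<omega> in M. norm (N j t \<omega> (z j t \<omega>) \<bullet> (xb t \<omega> - zstar)) \<le> c j * (G / lambar)"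
      using N_bdd[OF j t] xb_bound[OF t]
    proof eventually_elim
      case (elim \<omega>)
      have "norm (N j t \<omega> (z j t \<omega>) \<bullet> (xb t \<omega> - zstar)) \<le> norm (N j t \<omega> (z j t \<omega>)) * norm (xb t \<omega> - zstar)"
        using Cauchy_Schwarz_ineq2 by simp
      also have "\<dots> \<le> c j * (G / lambar)"
        using elim order_trans[OF norm_ge_zero elim(1)[rule_format]] by (intro mult_mono) auto
      finally show ?case .
    qed
    show "(\<lambda>\<omega>. N j t \<omega> (z j t \<omega>) \<bullet> (xb t \<omega> - zstar)) \<in> borel_measurable M" by measurable
  qed
qed

lemma zx_int: "j < n \<Longrightarrow> 1 \<le> t \<Longrightarrow> integrable M (\<lambda>\<omega>. norm (z j t \<omega> - xb t \<omega>))"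
  using z_int xb_int by (intro integrable_norm Bochner_Integration.integrable_diff) auto

lemma step_ineq:
  assumes t: "1 \<le> t"
  shows "ea (t + 1) \<le> (1 - \<alpha> t * lambar) * ea t
      + (4 * \<alpha> t * G / real n) * (\<Sum>j<n. integral\<^sup>L M (\<lambda>\<omega>. norm (z j t \<omega> - xb t \<omega>))) + (\<alpha> t)\<^sup>2 * G\<^sup>2"
proof -
  interpret prob_space M by (rule prob)
  define T1 where "T1 \<omega> = (1 - \<alpha> t * lambar) * (norm (xb t \<omega> - zstar))\<^sup>2" for \<omega>
  define T2 where "T2 \<omega> = (4 * \<alpha> t * G / real n) * (\<Sum>j<n. norm (z j t \<omega> - xb t \<omega>))" for \<omega>
  define T3 where "T3 \<omega> = (2 * \<alpha> t / real n) * (\<Sum>j<n. N j t \<omega> (z j t \<omega>) \<bullet> (xb t \<omega> - zstar))" for \<omega>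
  define T4 where "T4 \<omega> = ((\<alpha> t)\<^sup>2 / real n) * (\<Sum>j<n. (norm (gt j t \<omega>))\<^sup>2)" for \<omega>
  have i1: "integrable M T1" unfolding T1_def using e_int[OF t] by simp
  have i2: "integrable M T2" unfolding T2_def using zx_int t by (intro integrable_mult_right Bochner_Integration.integrable_sum) auto
  have i3: "integrable M T3" unfolding T3_def using Nd_int t by (intro integrable_mult_right Bochner_Integration.integrable_sum) auto
  have i4: "integrable M T4" unfolding T4_def using G_sq t by (intro integrable_mult_right Bochner_Integration.integrable_sum) auto
  have I1: "integral\<^sup>L M T1 = (1 - \<alpha> t * lambar) * ea t" unfolding T1_def ea_def by simp
  have I2: "integral\<^sup>L M T2 = (4 * \<alpha> t * G / real n) * (\<Sum>j<n. integral\<^sup>L M (\<lambda>\<omega>. norm (z j t \<omega> - xb t \<omega>)))"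
  proof -
    have "integral\<^sup>L M (\<lambda>\<omega>. \<Sum>j<n. norm (z j t \<omega> - xb t \<omega>)) = (\<Sum>j<n. integral\<^sup>L M (\<lambda>\<omega>. norm (z j t \<omega> - xb t \<omega>)))"
      by (rule Bochner_Integration.integral_sum) (use zx_int t in auto)
    then show ?thesis unfolding T2_def by simp
  qed
  have I3: "integral\<^sup>L M T3 = 0"
  proof -
    have "integral\<^sup>L M (\<lambda>\<omega>. \<Sum>j<n. N j t \<omega> (z j t \<omega>) \<bullet> (xb t \<omega> - zstar))
        = (\<Sum>j<n. integral\<^sup>L M (\<lambda>\<omega>. N j t \<omega> (z j t \<omega>) \<bullet> (xb t \<omega> - zstar)))"
      by (rule Bochner_Integration.integral_sum) (use Nd_int t in auto)
    also have "\<dots> = 0" using noise_zero t by simp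
    finally show ?thesis unfolding T3_def by simp
  qed
  have I4: "integral\<^sup>L M T4 \<le> (\<alpha> t)\<^sup>2 * G\<^sup>2"
  proof -
    have "integral\<^sup>L M T4 = ((\<alpha> t)\<^sup>2 / real n) * (\<Sum>j<n. integral\<^sup>L M (\<lambda>\<omega>. (norm (gt j t \<omega>))\<^sup>2))"
      unfolding T4_def using G_sq t by (simp add: Bochner_Integration.integral_sum)
    also have "\<dots> \<le> ((\<alpha> t)\<^sup>2 / real n) * (\<Sum>j<n. G\<^sup>2)"
      by (rule mult_left_mono, rule sum_mono) (use G_sq t in auto)
    also have "\<dots> = (\<alpha> t)\<^sup>2 * G\<^sup>2" using n_pos by simp
    finally show ?thesis .
  qed
  have ae: "AE \<omega> in M. (norm (xb (t + 1) \<omega> - zstar))\<^sup>2 \<le> T1 \<omega> + T2 \<omega> - T3 \<omega> + T4 \<omega>"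
    using AE_grad_z[OF t] AE_grad_avg[OF t]
    by eventually_elim (unfold T1_def T2_def T3_def T4_def, rule pt_step[OF t])
  have "ea (t + 1) \<le> integral\<^sup>L M (\<lambda>\<omega>. T1 \<omega> + T2 \<omega> - T3 \<omega> + T4 \<omega>)"
    unfolding ea_def
    by (rule integral_mono_AE) (use e_int[of "t + 1"] i1 i2 i3 i4 ae in auto)
  also have "integral\<^sup>L M (\<lambda>\<omega>. T1 \<omega> + T2 \<omega> - T3 \<omega> + T4 \<omega>) = integral\<^sup>L M T1 + integral\<^sup>L M T2 - integral\<^sup>L M T3 + integral\<^sup>L M T4"
    using i1 i2 i3 i4 by simp
  finally show ?thesis using I1 I2 I3 I4 by simp
qed

end

context sgp begin

definition "K1 = integral\<^sup>L M (\<lambda>\<omega>. \<Sum>k<n. norm (u k \<omega>))"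

lemma u_norm_int: "k < n \<Longrightarrow> integrable M (\<lambda>\<omega>. norm (u k \<omega>))"
  unfolding u_def[abs_def] using x_int gt_int
  by (intro integrable_norm Bochner_Integration.integrable_diff Bochner_Integration.integrable_scaleR_right) auto

lemma K1_nonneg: "0 \<le> K1"
  unfolding K1_def by (intro integral_nonneg_AE AE_I2 sum_nonneg) auto

lemma D_bound:
  assumes t: "1 \<le> t" and i: "i < n"
  shows "integral\<^sup>L M (\<lambda>\<omega>. norm (z i (t + 1) \<omega> - xb (t + 1) \<omega>))
    \<le> (1 / \<eta>) * (8 * \<mu> ^ (t - 1) * K1 + (\<Sum>s\<in>{2..t}. 8 * \<mu> ^ (t - s) * \<alpha> s * (real n * G)))"
proof -
  define R where "R \<omega> = (1 / \<eta>) * (8 * \<mu> ^ (t - 1) * (\<Sum>j<n. norm (u j \<omega>))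
           + (\<Sum>s\<in>{2..t}. 8 * \<mu> ^ (t - s) * \<alpha> s * (\<Sum>j<n. norm (gt j s \<omega>))))" for \<omega>
  have iu: "integrable M (\<lambda>\<omega>. \<Sum>j<n. norm (u j \<omega>))"
    by (rule Bochner_Integration.integrable_sum) (use u_norm_int in auto)
  have ig: "integrable M (\<lambda>\<omega>. \<Sum>j<n. norm (gt j s \<omega>))" if "s \<in> {2..t}" for s
    by (rule Bochner_Integration.integrable_sum) (use gt_norm_int that in auto)
  have c: "integrable M (\<lambda>\<omega>. \<Sum>s\<in>{2..t}. 8 * \<mu> ^ (t - s) * \<alpha> s * (\<Sum>j<n. norm (gt j s \<omega>)))"
    by (rule Bochner_Integration.integrable_sum, rule integrable_mult_right) (use ig in auto)
  have iR: "integrable M R" unfolding R_def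
    by (rule integrable_mult_right, rule Bochner_Integration.integrable_add, rule integrable_mult_right) (use iu c in auto)
  have "integral\<^sup>L M (\<lambda>\<omega>. norm (z i (t + 1) \<omega> - xb (t + 1) \<omega>)) \<le> integral\<^sup>L M R"
    by (rule integral_mono) (use zx_int[OF i, of "t + 1"] iR zx_bound[OF t i] in \<open>auto simp: R_def\<close>)
  also have "integral\<^sup>L M R = (1 / \<eta>) * (8 * \<mu> ^ (t - 1) * K1
      + (\<Sum>s\<in>{2..t}. 8 * \<mu> ^ (t - s) * \<alpha> s * integral\<^sup>L M (\<lambda>\<omega>. \<Sum>j<n. norm (gt j s \<omega>))))"
  proof -
    have "integral\<^sup>L M (\<lambda>\<omega>. \<Sum>s\<in>{2..t}. 8 * \<mu> ^ (t - s) * \<alpha> s * (\<Sum>j<n. norm (gt j s \<omega>)))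
        = (\<Sum>s\<in>{2..t}. integral\<^sup>L M (\<lambda>\<omega>. 8 * \<mu> ^ (t - s) * \<alpha> s * (\<Sum>j<n. norm (gt j s \<omega>))))"
      by (rule Bochner_Integration.integral_sum) (use ig in auto)
    also have "\<dots> = (\<Sum>s\<in>{2..t}. 8 * \<mu> ^ (t - s) * \<alpha> s * integral\<^sup>L M (\<lambda>\<omega>. \<Sum>j<n. norm (gt j s \<omega>)))"
      by simp
    finally have a: "integral\<^sup>L M (\<lambda>\<omega>. \<Sum>s\<in>{2..t}. 8 * \<mu> ^ (t - s) * \<alpha> s * (\<Sum>j<n. norm (gt j s \<omega>)))
        = (\<Sum>s\<in>{2..t}. 8 * \<mu> ^ (t - s) * \<alpha> s * integral\<^sup>L M (\<lambda>\<omega>. \<Sum>j<n. norm (gt j s \<omega>)))" .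
    have b: "integral\<^sup>L M (\<lambda>\<omega>. 8 * \<mu> ^ (t - 1) * (\<Sum>j<n. norm (u j \<omega>))) = 8 * \<mu> ^ (t - 1) * K1"
      unfolding K1_def by simp
    show ?thesis unfolding R_def using a b c iu by simp
  qed
  also have "\<dots> \<le> (1 / \<eta>) * (8 * \<mu> ^ (t - 1) * K1 + (\<Sum>s\<in>{2..t}. 8 * \<mu> ^ (t - s) * \<alpha> s * (real n * G)))"
  proof (rule mult_left_mono)
    show "0 \<le> 1 / \<eta>" using \<eta>_pos by simp
    have "(\<Sum>s\<in>{2..t}. 8 * \<mu> ^ (t - s) * \<alpha> s * integral\<^sup>L M (\<lambda>\<omega>. \<Sum>j<n. norm (gt j s \<omega>)))
        \<le> (\<Sum>s\<in>{2..t}. 8 * \<mu> ^ (t - s) * \<alpha> s * (real n * G))"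
    proof (rule sum_mono)
      fix s assume s: "s \<in> {2..t}"
      have "integral\<^sup>L M (\<lambda>\<omega>. \<Sum>j<n. norm (gt j s \<omega>)) = (\<Sum>j<n. integral\<^sup>L M (\<lambda>\<omega>. norm (gt j s \<omega>)))"
        by (rule Bochner_Integration.integral_sum) (use gt_norm_int s in auto)
      also have "\<dots> \<le> (\<Sum>j<n. G)" by (rule sum_mono) (use gt_norm_le s in auto)
      finally have le: "integral\<^sup>L M (\<lambda>\<omega>. \<Sum>j<n. norm (gt j s \<omega>)) \<le> real n * G" by simp
      have "0 \<le> 8 * \<mu> ^ (t - s) * \<alpha> s" using s \<alpha>_def[of s] lambar_pos \<mu>_range by simp
      with le show "8 * \<mu> ^ (t - s) * \<alpha> s * integral\<^sup>L M (\<lambda>\<omega>. \<Sum>j<n. norm (gt j s \<omega>))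
          \<le> 8 * \<mu> ^ (t - s) * \<alpha> s * (real n * G)" by (intro mult_left_mono)
    qed
    then show "8 * \<mu> ^ (t - 1) * K1 + (\<Sum>s\<in>{2..t}. 8 * \<mu> ^ (t - s) * \<alpha> s * integral\<^sup>L M (\<lambda>\<omega>. \<Sum>j<n. norm (gt j s \<omega>)))
        \<le> 8 * \<mu> ^ (t - 1) * K1 + (\<Sum>s\<in>{2..t}. 8 * \<mu> ^ (t - s) * \<alpha> s * (real n * G))" by simp
  qed
  finally show ?thesis .
qed

end

context sgp begin

lemma final_bound:
  assumes T: "1 \<le> T"
    and K2: "K2 = - (\<mu> powr (- 1 / ln \<mu>)) / ln \<mu>"
    and C: "C = 4 + 128 * K1 * K2 * lambar / (G * \<eta> * \<mu>\<^sup>2) + 512 * real n * (K2 + 1) / (\<eta> * (1 - \<mu>) * \<mu>)"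
  shows "ea T \<le> 4 * C * G\<^sup>2 / (lambar\<^sup>2 * real T)"
proof -
  define A where "A = (G / lambar)\<^sup>2"
  define P where "P = 64 * G * K1 / (lambar * \<eta>)"
  define Q where "Q = 128 * real n * G\<^sup>2 / (lambar\<^sup>2 * \<eta>)"
  define B where "B = 4 * C * G\<^sup>2 / lambar\<^sup>2"
  have lp: "0 < lambar" by (rule lambar_pos)
  have mu: "0 < \<mu>" "\<mu> < 1" using \<mu>_range by auto
  have K20: "0 \<le> K2" using K2_pos[OF mu] K2 by simp
  have A0: "0 \<le> A" unfolding A_def by simp
  have P0: "0 \<le> P" unfolding P_def using G_pos K1_nonneg lp \<eta>_pos by simp
  have Q0: "0 \<le> Q" unfolding Q_def using G_pos lp \<eta>_pos by simp
  have Beq: "B = 16 * A + 8 * (P * K2 / \<mu>\<^sup>2) + 16 * (Q * (K2 + 1) / ((1 - \<mu>) * \<mu>))"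
    unfolding B_def C A_def P_def Q_def using G_pos lp \<eta>_pos mu
    by (simp add: field_simps power2_eq_square)
  have t1: "0 \<le> P * K2 / \<mu>\<^sup>2" using P0 K20 by simp
  have t2: "0 \<le> Q * (K2 + 1) / ((1 - \<mu>) * \<mu>)" using Q0 K20 mu by simp
  have B1: "2 * A \<le> B" using Beq A0 t1 t2 by simp
  have B2: "4 * A + P * K2 / \<mu>\<^sup>2 + Q * (4 * (K2 + 1) / (1 - \<mu>)) \<le> B"
  proof -
    have "Q * (4 * (K2 + 1) / (1 - \<mu>)) = 4 * (Q * (K2 + 1) / ((1 - \<mu>) * \<mu>)) * \<mu>"
      using mu by (simp add: field_simps)
    also have "\<dots> \<le> 4 * (Q * (K2 + 1) / ((1 - \<mu>) * \<mu>)) * 1"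
      using t2 mu by (intro mult_left_mono) auto
    finally have X: "Q * (4 * (K2 + 1) / (1 - \<mu>)) \<le> 4 * (Q * (K2 + 1) / ((1 - \<mu>) * \<mu>))" by simp
    define a where "a = P * K2 / \<mu>\<^sup>2"
    define b where "b = Q * (K2 + 1) / ((1 - \<mu>) * \<mu>)"
    define X' where "X' = Q * (4 * (K2 + 1) / (1 - \<mu>))"
    have "B = 16 * A + 8 * a + 16 * b" unfolding a_def b_def by (rule Beq)
    moreover have "X' \<le> 4 * b" unfolding X'_def b_def by (rule X)
    moreover have "0 \<le> a" "0 \<le> b" unfolding a_def b_def using t1 t2 by auto
    ultimately have "4 * A + a + X' \<le> B" using A0 by linarith
    then show ?thesis unfolding a_def X'_def .
  qed
  have step: "ea (t + 1) \<le> (1 - 2 / real t) * ea t + 4 * A / (real t)\<^sup>2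
         + P * \<mu> ^ (t - 2) / real t + Q / real t * (\<Sum>r\<in>{2..<t}. \<mu> ^ (t - 1 - r) / real r)" if t: "2 \<le> t" for t
  proof -
    have t1': "1 \<le> t" using t by simp
    have al: "\<alpha> t = 2 / (lambar * real t)" using \<alpha>_def t1' by simp
    have al0: "0 \<le> 4 * \<alpha> t * G / real n" using al lp G_pos by simp
    define S where "S = (\<Sum>r\<in>{2..<t}. \<mu> ^ (t - 1 - r) / real r)"
    have set: "{2..t - 1} = {2..<t}" using t by auto
    have Dj: "integral\<^sup>L M (\<lambda>\<omega>. norm (z j t \<omega> - xb t \<omega>))
        \<le> (1 / \<eta>) * (8 * \<mu> ^ (t - 2) * K1 + (16 * real n * G / lambar) * S)" if j: "j < n" for j
    proof -
      have "integral\<^sup>L M (\<lambda>\<omega>. norm (z j (t - 1 + 1) \<omega> - xb (t - 1 + 1) \<omega>))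
        \<le> (1 / \<eta>) * (8 * \<mu> ^ (t - 1 - 1) * K1 + (\<Sum>s\<in>{2..t - 1}. 8 * \<mu> ^ (t - 1 - s) * \<alpha> s * (real n * G)))"
        using D_bound[of "t - 1" j] t j by simp
      moreover have "t - 1 + 1 = t" using t by simp
      moreover have "t - 1 - 1 = t - 2" by simp
      moreover have "(\<Sum>s\<in>{2..t - 1}. 8 * \<mu> ^ (t - 1 - s) * \<alpha> s * (real n * G)) = (16 * real n * G / lambar) * S"
        unfolding set S_def sum_distrib_left
      proof (rule sum.cong[OF refl])
        fix s assume "s \<in> {2..<t}"
        then have s: "1 \<le> s" by simp
        show "8 * \<mu> ^ (t - 1 - s) * \<alpha> s * (real n * G) = 16 * real n * G / lambar * (\<mu> ^ (t - 1 - s) / real s)"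
          using \<alpha>_def[OF s] lp s by (simp add: field_simps)
      qed
      ultimately show ?thesis by simp
    qed
    have SD: "(\<Sum>j<n. integral\<^sup>L M (\<lambda>\<omega>. norm (z j t \<omega> - xb t \<omega>)))
        \<le> real n * ((1 / \<eta>) * (8 * \<mu> ^ (t - 2) * K1 + (16 * real n * G / lambar) * S))"
    proof -
      have "(\<Sum>j<n. integral\<^sup>L M (\<lambda>\<omega>. norm (z j t \<omega> - xb t \<omega>)))
          \<le> (\<Sum>j<n. (1 / \<eta>) * (8 * \<mu> ^ (t - 2) * K1 + (16 * real n * G / lambar) * S))"
        by (rule sum_mono) (use Dj in auto)
      then show ?thesis by simp
    qed
    have "ea (t + 1) \<le> (1 - \<alpha> t * lambar) * ea t
      + (4 * \<alpha> t * G / real n) * (\<Sum>j<n. integral\<^sup>L M (\<lambda>\<omega>. norm (z j t \<omega> - xb t \<omega>))) + (\<alpha> t)\<^sup>2 * G\<^sup>2"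
      by (rule step_ineq[OF t1'])
    also have "(4 * \<alpha> t * G / real n) * (\<Sum>j<n. integral\<^sup>L M (\<lambda>\<omega>. norm (z j t \<omega> - xb t \<omega>)))
        \<le> (4 * \<alpha> t * G / real n) * (real n * ((1 / \<eta>) * (8 * \<mu> ^ (t - 2) * K1 + (16 * real n * G / lambar) * S)))"
      using SD al0 by (rule mult_left_mono)
    also have "(4 * \<alpha> t * G / real n) * (real n * ((1 / \<eta>) * (8 * \<mu> ^ (t - 2) * K1 + (16 * real n * G / lambar) * S)))
        = P * \<mu> ^ (t - 2) / real t + Q / real t * S"
      unfolding al P_def Q_def using n_pos lp \<eta>_pos t by (simp add: field_simps power2_eq_square)
    also have "(1 - \<alpha> t * lambar) = 1 - 2 / real t" using al lp by simp
    also have "(\<alpha> t)\<^sup>2 * G\<^sup>2 = 4 * A / (real t)\<^sup>2" unfolding al A_def using lp t by (simp add: field_simps power2_eq_square)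
    finally show ?thesis by (simp add: S_def algebra_simps)
  qed
  have "ea T \<le> B / real T"
    by (rule rec_bound[OF mu K2 A0 P0 Q0 _ _ step B1 B2 T]) (use e_le[of 1] e_le[of 2] in \<open>simp_all add: A_def ea_def\<close>)
  then show ?thesis unfolding B_def using lp by (simp add: field_simps)
qed

end

theorem proposition3:
  fixes M :: "'a measure"
    and n L :: nat and \<beta> :: real
    and E :: "nat \<Rightarrow> (nat \<times> nat) set"
    and w :: "nat \<Rightarrow> nat \<Rightarrow> nat \<Rightarrow> real"
    and f :: "nat \<Rightarrow> 'v::euclidean_space \<Rightarrow> real"
    and grad :: "nat \<Rightarrow> 'v \<Rightarrow> 'v"
    and lam gam c :: "nat \<Rightarrow> real"
    and zstar :: 'v
    and x :: "nat \<Rightarrow> nat \<Rightarrow> 'a \<Rightarrow> 'v"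
    and y :: "nat \<Rightarrow> nat \<Rightarrow> real"
    and gt :: "nat \<Rightarrow> nat \<Rightarrow> 'a \<Rightarrow> 'v"
    and N :: "nat \<Rightarrow> nat \<Rightarrow> 'a \<Rightarrow> 'v \<Rightarrow> 'v"
    and \<alpha> :: "nat \<Rightarrow> real"
    and G \<eta> \<mu> :: real
  defines "lambar \<equiv> (\<Sum>i<n. lam i) / real n"
  defines "z \<equiv> (\<lambda>i t \<omega>. (1 / y i t) *\<^sub>R x i t \<omega>)"
  defines "K1 \<equiv> integral\<^sup>L M (\<lambda>\<omega>. \<Sum>k<n. norm (x k 1 \<omega> - \<alpha> 1 *\<^sub>R gt k 1 \<omega>))"
  defines "K2 \<equiv> - (\<mu> powr (- 1 / ln \<mu>)) / ln \<mu>"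
  defines "C \<equiv> 4 + 128 * K1 * K2 * lambar / (G * \<eta> * \<mu>\<^sup>2)
                 + 512 * real n * (K2 + 1) / (\<eta> * (1 - \<mu>) * \<mu>)"
  assumes prob: "prob_space M"
    and n_pos: "0 < n"
    (* graphs: self-arcs, uniform strong connectivity by sub-sequences of length L *)
    and L_pos: "0 < L"
    and E_sub: "\<And>t. E t \<subseteq> {..<n} \<times> {..<n}"
    and E_self: "\<And>t i. i < n \<Longrightarrow> (i, i) \<in> E t"
    and E_conn: "\<And>t i j. 1 \<le> t \<Longrightarrow> i < n \<Longrightarrow> j < n \<Longrightarrow>
                   (i, j) \<in> (\<Union>k\<in>{t..t + L - 1}. E k)\<^sup>*"
    (* weights *)
    and \<beta>_pos: "0 < \<beta>"
    and w_pos: "\<And>t i j. i < n \<Longrightarrow> j < n \<Longrightarrow> (j, i) \<in> E t \<Longrightarrow> \<beta> \<le> w t i j"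
    and w_zero: "\<And>t i j. i < n \<Longrightarrow> j < n \<Longrightarrow> (j, i) \<notin> E t \<Longrightarrow> w t i j = 0"
    and w_col: "\<And>t i. i < n \<Longrightarrow> (\<Sum>k\<in>{k. k < n \<and> (i, k) \<in> E t}. w t k i) = 1"
    (* local functions *)
    and f_grad: "\<And>i v. i < n \<Longrightarrow> (f i has_derivative (\<lambda>h. grad i v \<bullet> h)) (at v)"
    and lam_pos: "\<And>i. i < n \<Longrightarrow> 0 < lam i"
    and f_sconv: "\<And>i u v. i < n \<Longrightarrow>
                   f i u - f i v \<ge> grad i v \<bullet> (u - v) + lam i / 2 * (norm (u - v))\<^sup>2"
    and f_smooth: "\<And>i u v. i < n \<Longrightarrow> norm (grad i u - grad i v) \<le> gam i * norm (u - v)"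
    and zstar_min: "\<And>v. v \<noteq> zstar \<Longrightarrow>
                   (\<Sum>i<n. f i zstar) / real n < (\<Sum>i<n. f i v) / real n"
    (* stepsize *)
    and \<alpha>_def: "\<And>t. 1 \<le> t \<Longrightarrow> \<alpha> t = 2 / (lambar * real t)"
    (* stochastic gradient-push *)
    and x_meas: "\<And>i. i < n \<Longrightarrow> x i 1 \<in> borel_measurable M"
    and x1_int: "\<And>i. i < n \<Longrightarrow> integrable M (\<lambda>\<omega>. norm (x i 1 \<omega>))"
    and x_step: "\<And>i t \<omega>. i < n \<Longrightarrow> 1 \<le> t \<Longrightarrow>
                   x i (t + 1) \<omega> = (\<Sum>j<n. w t i j *\<^sub>R (x j t \<omega> - \<alpha> t *\<^sub>R gt j t \<omega>))"
    and y_1: "\<And>i. i < n \<Longrightarrow> y i 1 = 1"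
    and y_step: "\<And>i t. i < n \<Longrightarrow> 1 \<le> t \<Longrightarrow> y i (t + 1) = (\<Sum>j<n. w t i j * y j t)"
    (* noisy gradients *)
    and gt_meas: "\<And>i t. i < n \<Longrightarrow> 1 \<le> t \<Longrightarrow> gt i t \<in> borel_measurable M"
    and gt_def: "\<And>i t \<omega>. i < n \<Longrightarrow> 1 \<le> t \<Longrightarrow>
                   gt i t \<omega> = grad i (z i t \<omega>) + N i t \<omega> (z i t \<omega>)"
    and N_meas: "\<And>i t. i < n \<Longrightarrow> 1 \<le> t \<Longrightarrow>
                   N i t \<in> M \<rightarrow>\<^sub>M Pi\<^sub>M UNIV (\<lambda>_. borel)"
    and N_indep: "prob_space.indep_vars M (\<lambda>_. Pi\<^sub>M UNIV (\<lambda>_. borel))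
                   (\<lambda>(i, t). N i t) ({..<n} \<times> {1..})"
    and N_zero_mean: "\<And>i t A. i < n \<Longrightarrow> 1 \<le> t \<Longrightarrow> A \<in> hist M n x gt t \<Longrightarrow>
                   (LINT \<omega>:A|M. N i t \<omega> (z i t \<omega>)) = 0"
    and N_bdd: "\<And>i t. i < n \<Longrightarrow> 1 \<le> t \<Longrightarrow> AE \<omega> in M. \<forall>v. norm (N i t \<omega> v) \<le> c i"
    (* the constants G, eta, mu *)
    and G_pos: "0 < G"
    and G_sq: "\<And>i t. i < n \<Longrightarrow> 1 \<le> t \<Longrightarrow>
                   integrable M (\<lambda>\<omega>. (norm (gt i t \<omega>))\<^sup>2) \<and>
                   integral\<^sup>L M (\<lambda>\<omega>. (norm (gt i t \<omega>))\<^sup>2) \<le> G\<^sup>2"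
    and G_grad_z: "\<And>i t. i < n \<Longrightarrow> 1 \<le> t \<Longrightarrow> AE \<omega> in M. norm (grad i (z i t \<omega>)) \<le> G"
    and G_grad_avg: "\<And>i t. i < n \<Longrightarrow> 1 \<le> t \<Longrightarrow>
                   AE \<omega> in M. norm (grad i ((1 / real n) *\<^sub>R (\<Sum>k<n. x k t \<omega>))) \<le> G"
    and \<eta>_pos: "0 < \<eta>"
    and \<eta>_bound: "\<And>i t. i < n \<Longrightarrow> 1 \<le> t \<Longrightarrow> \<eta> \<le> y i t"
    and \<mu>_range: "0 < \<mu>" "\<mu> < 1"
    and \<mu>_mixing: "\<exists>\<phi> :: nat \<Rightarrow> nat \<Rightarrow> real. \<forall>t. stoch_vec n (\<phi> t) \<and>
                   (\<forall>s i j. 1 \<le> s \<longrightarrow> s \<le> t \<longrightarrow> i < n \<longrightarrow> j < n \<longrightarrow>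
                      \<bar>PhiW n w (t + 1) s i j - \<phi> t i\<bar> \<le> 4 * \<mu> ^ (t - s))"
  shows "\<And>t. 1 \<le> t \<Longrightarrow>
           (\<integral>\<^sup>+ \<omega>. ennreal ((norm ((1 / real n) *\<^sub>R (\<Sum>i<n. x i t \<omega>) - zstar))\<^sup>2) \<partial>M)
             \<le> ennreal (4 * C * G\<^sup>2 / (lambar\<^sup>2 * real t))"
proof -
  have wc: "\<And>t j. j < n \<Longrightarrow> (\<Sum>i<n. w t i j) = 1"
  proof -
    fix t j assume j: "j < n"
    have "(\<Sum>i<n. w t i j) = (\<Sum>k\<in>{k. k < n \<and> (j, k) \<in> E t}. w t k j)"
      by (rule sum.mono_neutral_right) (use w_zero j in auto)
    then show "(\<Sum>i<n. w t i j) = 1" using w_col[OF j] by simp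
  qed
  have ld: "lambar = (\<Sum>i<n. lam i) / real n" using assms(1) by simp
  have zd: "z = (\<lambda>i t \<omega>. (1 / y i t) *\<^sub>R x i t \<omega>)" using assms(2) by simp
  interpret S: sgp M n w f grad lam gam c zstar x y gt N \<alpha> G \<eta> \<mu> lambar z
    by (rule sgp.intro[OF prob n_pos wc ld zd lam_pos f_sconv f_smooth zstar_min \<alpha>_def x_meas x1_int
          x_step y_1 y_step gt_meas gt_def N_zero_mean N_bdd G_pos G_sq G_grad_z G_grad_avg \<eta>_pos
          \<eta>_bound \<mu>_range \<mu>_mixing])
  have K1eq: "S.K1 = K1" unfolding S.K1_def S.u_def using assms(3) by simp
  have K2eq: "K2 = - (\<mu> powr (- 1 / ln \<mu>)) / ln \<mu>" using assms(4) by simp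
  have Ceq: "C = 4 + 128 * S.K1 * K2 * lambar / (G * \<eta> * \<mu>\<^sup>2) + 512 * real n * (K2 + 1) / (\<eta> * (1 - \<mu>) * \<mu>)"
    using assms(5) K1eq by simp
  fix t :: nat assume t: "1 \<le> t"
  have fb: "S.ea t \<le> 4 * C * G\<^sup>2 / (lambar\<^sup>2 * real t)" by (rule S.final_bound[OF t K2eq Ceq])
  have "(\<integral>\<^sup>+ \<omega>. ennreal ((norm ((1 / real n) *\<^sub>R (\<Sum>i<n. x i t \<omega>) - zstar))\<^sup>2) \<partial>M) = ennreal (S.ea t)"
    unfolding S.ea_def S.xb_def
    by (rule nn_integral_eq_integral) (use S.e_int[OF t] in \<open>auto simp: S.xb_def\<close>)
  also have "\<dots> \<le> ennreal (4 * C * G\<^sup>2 / (lambar\<^sup>2 * real t))" using fb by (rule ennreal_leI)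
  finally show "(\<integral>\<^sup>+ \<omega>. ennreal ((norm ((1 / real n) *\<^sub>R (\<Sum>i<n. x i t \<omega>) - zstar))\<^sup>2) \<partial>M)
             \<le> ennreal (4 * C * G\<^sup>2 / (lambar\<^sup>2 * real t))" .
qed

end
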